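(* For every $\varepsilon,\alpha>0$ and $d\in\mathbb{N}$, there exists an $\varepsilon$-$\nabla_0$DP proper PAC learner with error at most $\alpha$ and sample complexity $n=\tilde O\!\left(\frac{1}{\alpha\varepsilon}\log d\right)$ for the class of point functions, and likewise for the class of threshold functions (where $\tilde O$ hides factors polylogarithmic in $1/\alpha$ and $\log d$).
   Context: PAC setting: an unknown distribution $\mathcal{D}$ on $\{0,1\}^d\times\{0,1\}$; the learner gets $n$ i.i.d. samples $(x_i,y_i)$. $\mathrm{err}(h;\mathcal{D})=\Pr_{(x,y)\sim\mathcal{D}}[h(x)\ne y]$. An algorithm is a PAC learner for $\mathcal{H}$ with error at most $\alpha$ if, whenever $\mathcal{D}$ is realizable by some $h\in\mathcal{H}$ (i.e., $y=h(x)$ almost surely), with probability at least $0.9$ it outputs $h'$ with $\mathrm{err}(h';\mathcal{D})\le\alpha$; it is proper if its output lies in $\mathcal{H}$. Point functions: $\mathrm{point}_u(z)=\mathbf{1}[u=z]$, $u\in\{0,1\}^d$. Threshold functions: with $\{0,1\}^d$ ordered lexicographically, $\mathrm{Thre}_z(x)=\mathbf{1}[x\ge z]$, $z\in\{0,1\}^d$. For privacy each sample $(x_i,y_i)$ is treated as a record in $\{0,1\}^{d+1}$ (label as an extra attribute), and $M$ is $\varepsilon$-$\nabla_0$DP if for all datasets differing only in record $i$, $\Pr[M(D)\in S]\le e^{\varepsilon\|D_i-D'_i\|_0}\Pr[M(D')\in S]$ with $\|\cdot\|_0$ the Hamming distance. *)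

theory Defs
  imports "HOL-Probability.Probability"
begin

text \<open>Points of {0,1}^d are boolean lists of length d (False = 0, True = 1).
  A labelled example (x,y) is a record in {0,1}^(d+1).\<close>

type_synonym example = "bool list \<times> bool"
type_synonym hyp = "bool list \<Rightarrow> bool"

definition cube :: "nat \<Rightarrow> bool list set" where
  "cube d = {x. length x = d}"

definition point_fn :: "bool list \<Rightarrow> hyp" where
  "point_fn u = (\<lambda>z. u = z)"

definition point_class :: "nat \<Rightarrow> hyp set" where
  "point_class d = {point_fn u | u. u \<in> cube d}"

definition lex_le :: "bool list \<Rightarrow> bool list \<Rightarrow> bool" where
  "lex_le z x \<longleftrightarrow> z = x \<or> (z, x) \<in> lexord {(False, True)}"

definition thre_fn :: "bool list \<Rightarrow> hyp" where
  "thre_fn z = (\<lambda>x. lex_le z x)"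

definition thre_class :: "nat \<Rightarrow> hyp set" where
  "thre_class d = {thre_fn z | z. z \<in> cube d}"

definition err :: "hyp \<Rightarrow> example pmf \<Rightarrow> real" where
  "err h D = measure_pmf.prob D {(x, y). h x \<noteq> y}"

primrec iid :: "'a pmf \<Rightarrow> nat \<Rightarrow> 'a list pmf" where
  "iid D 0 = return_pmf []"
| "iid D (Suc n) = bind_pmf D (\<lambda>s. map_pmf (\<lambda>ss. s # ss) (iid D n))"

definition distr_on :: "nat \<Rightarrow> example pmf \<Rightarrow> bool" where
  "distr_on d D \<longleftrightarrow> (\<forall>(x, y) \<in> set_pmf D. x \<in> cube d)"

definition realizable :: "hyp set \<Rightarrow> example pmf \<Rightarrow> bool" where
  "realizable H D \<longleftrightarrow> (\<exists>h\<in>H. \<forall>(x, y) \<in> set_pmf D. y = h x)"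

definition pac_learner ::
  "nat \<Rightarrow> hyp set \<Rightarrow> real \<Rightarrow> nat \<Rightarrow> (example list \<Rightarrow> hyp pmf) \<Rightarrow> bool" where
  "pac_learner d H \<alpha> n M \<longleftrightarrow>
     (\<forall>D. distr_on d D \<and> realizable H D \<longrightarrow>
        measure_pmf.prob (bind_pmf (iid D n) M) {h. err h D \<le> \<alpha>} \<ge> 0.9)"

definition proper :: "hyp set \<Rightarrow> (example list \<Rightarrow> hyp pmf) \<Rightarrow> bool" where
  "proper H M \<longleftrightarrow> (\<forall>S. set_pmf (M S) \<subseteq> H)"

definition ham :: "nat \<Rightarrow> example \<Rightarrow> example \<Rightarrow> nat" where
  "ham d r r' = card {j. j < d \<and> fst r ! j \<noteq> fst r' ! j}
                + (if snd r \<noteq> snd r' then 1 else 0)"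

definition record_on :: "nat \<Rightarrow> example \<Rightarrow> bool" where
  "record_on d r \<longleftrightarrow> fst r \<in> cube d"

definition nabla0_dp :: "nat \<Rightarrow> nat \<Rightarrow> real \<Rightarrow> (example list \<Rightarrow> hyp pmf) \<Rightarrow> bool" where
  "nabla0_dp d n \<epsilon> M \<longleftrightarrow>
     (\<forall>Ds Ds' i S. length Ds = n \<and> length Ds' = n \<and> i < n
        \<and> (\<forall>r\<in>set Ds. record_on d r) \<and> (\<forall>r\<in>set Ds'. record_on d r)
        \<and> (\<forall>j<n. j \<noteq> i \<longrightarrow> Ds ! j = Ds' ! j) \<longrightarrow>
        measure_pmf.prob (M Ds) S
          \<le> exp (\<epsilon> * real (ham d (Ds ! i) (Ds' ! i))) * measure_pmf.prob (M Ds') S)"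

end

theory Submission
  imports Defs "HOL-Library.List_Lexorder"
begin


lemma set_pmf_iid: "xs \<in> set_pmf (iid D n) \<Longrightarrow> length xs = n \<and> set xs \<subseteq> set_pmf D"
  by (induction n arbitrary: xs) force+

lemma finite_set_pmf_iid: "finite (set_pmf D) \<Longrightarrow> finite (set_pmf (iid D n))"
  by (induction n) auto

lemma prod_list_map_nonneg:
  fixes f :: "'a \<Rightarrow> real"
  shows "(\<And>x. f x \<ge> 0) \<Longrightarrow> 0 \<le> prod_list (map f xs)"
  by (induction xs) auto

lemma nn_integral_iid_prod:
  fixes f :: "'a \<Rightarrow> real"
  assumes "\<And>x. f x \<ge> 0"
  shows "(\<integral>\<^sup>+xs. ennreal (prod_list (map f xs)) \<partial>measure_pmf (iid D n)) = (\<integral>\<^sup>+x. ennreal (f x) \<partial>measure_pmf D) ^ n"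
proof (induction n)
  case 0
  then show ?case by simp
next
  case (Suc n)
  have "(\<integral>\<^sup>+xs. ennreal (prod_list (map f xs)) \<partial>measure_pmf (iid D (Suc n)))
     = (\<integral>\<^sup>+s. (\<integral>\<^sup>+ys. ennreal (f s) * ennreal (prod_list (map f ys)) \<partial>measure_pmf (iid D n)) \<partial>measure_pmf D)"
    by (auto intro!: nn_integral_cong simp: ennreal_mult assms prod_list_map_nonneg)
  also have "\<dots> = (\<integral>\<^sup>+s. ennreal (f s) * (\<integral>\<^sup>+ys. ennreal (prod_list (map f ys)) \<partial>measure_pmf (iid D n)) \<partial>measure_pmf D)"
    by (simp add: nn_integral_cmult)
  also have "\<dots> = (\<integral>\<^sup>+s. ennreal (f s) \<partial>measure_pmf D) * (\<integral>\<^sup>+x. ennreal (f x) \<partial>measure_pmf D) ^ n"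
    by (simp add: Suc nn_integral_multc)
  finally show ?case by (simp add: mult.commute)
qed

lemma expectation_iid_prod:
  fixes f :: "'a \<Rightarrow> real"
  assumes "finite (set_pmf D)" "\<And>x. f x \<ge> 0"
  shows "measure_pmf.expectation (iid D n) (\<lambda>xs. prod_list (map f xs)) = (measure_pmf.expectation D f) ^ n"
proof -
  have i1: "integrable (measure_pmf (iid D n)) (\<lambda>xs. prod_list (map f xs))"
    by (simp add: integrable_measure_pmf_finite finite_set_pmf_iid assms(1))
  have i2: "integrable (measure_pmf D) f"
    by (simp add: integrable_measure_pmf_finite assms(1))
  have "ennreal (measure_pmf.expectation (iid D n) (\<lambda>xs. prod_list (map f xs)))
      = (\<integral>\<^sup>+xs. ennreal (prod_list (map f xs)) \<partial>measure_pmf (iid D n))"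
    by (rule nn_integral_eq_integral[OF i1, symmetric]) (auto simp: assms prod_list_map_nonneg)
  also have "\<dots> = (\<integral>\<^sup>+x. ennreal (f x) \<partial>measure_pmf D) ^ n"
    by (rule nn_integral_iid_prod) (rule assms)
  also have "\<dots> = ennreal (measure_pmf.expectation D f) ^ n"
    by (subst nn_integral_eq_integral[OF i2]) (auto simp: assms)
  also have "\<dots> = ennreal ((measure_pmf.expectation D f) ^ n)"
    by (simp add: ennreal_power assms)
  finally show ?thesis
    by (subst (asm) ennreal_inj) (auto simp: assms prod_list_map_nonneg intro!: integral_nonneg_AE)
qed

definition cnt :: "'a set \<Rightarrow> 'a list \<Rightarrow> nat" where
  "cnt A xs = length (filter (\<lambda>r. r \<in> A) xs)"

lemma prod_list_ind: "prod_list (map (\<lambda>r. if r \<in> A then c else 1) xs) = c ^ cnt A xs"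
  by (induction xs) (auto simp: cnt_def)

lemma expectation_ind_fun:
  fixes c :: real
  shows "measure_pmf.expectation D (\<lambda>r. if r \<in> A then c else 1) = 1 + (c - 1) * measure_pmf.prob D A"
proof -
  have "(\<lambda>r. if r \<in> A then c else 1) = (\<lambda>r. 1 + (c - 1) * indicator A r)"
    by (auto simp: indicator_def)
  then show ?thesis by (simp add: measure_pmf.emeasure_eq_measure)
qed

lemma lower_tail:
  assumes fin: "finite (set_pmf D)"
  shows "measure_pmf.prob (iid D n) {xs. real (cnt A xs) \<le> a}
          \<le> 2 powr a * exp (- measure_pmf.prob D A * n / 2)"
proof -
  let ?g = "\<lambda>xs. prod_list (map (\<lambda>r. if r \<in> A then (1/2::real) else 1) xs)"
  have g: "?g xs = 2 powr (- real (cnt A xs))" for xs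
    by (simp add: prod_list_ind powr_minus powr_realpow power_one_over inverse_eq_divide)
  have "{xs. real (cnt A xs) \<le> a} = {xs. 2 powr (-a) \<le> ?g xs}"
    by (auto simp: g)
  hence "measure_pmf.prob (iid D n) {xs. real (cnt A xs) \<le> a}
      = measure_pmf.prob (iid D n) {xs. 2 powr (-a) \<le> ?g xs}" by simp
  also have "\<dots> \<le> measure_pmf.expectation (iid D n) ?g / 2 powr (-a)"
  proof -
    have "AE x in measure_pmf (iid D n). 0 \<le> ?g x"
      by (rule AE_I2) (rule prod_list_map_nonneg, simp)
    moreover have "integrable (measure_pmf (iid D n)) ?g"
      by (simp add: integrable_measure_pmf_finite finite_set_pmf_iid fin)
    ultimately show ?thesis
      using integral_Markov_inequality_measure[where M="measure_pmf (iid D n)" and A=UNIV and u="?g" and c="2 powr (-a)"]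
      by simp
  qed
  also have "measure_pmf.expectation (iid D n) ?g = (1 - measure_pmf.prob D A / 2) ^ n"
    by (subst expectation_iid_prod[OF fin]) (auto simp: expectation_ind_fun)
  also have "\<dots> \<le> exp (- measure_pmf.prob D A / 2) ^ n"
  proof (rule power_mono)
    show "1 - measure_pmf.prob D A / 2 \<le> exp (- measure_pmf.prob D A / 2)"
      using exp_ge_add_one_self[of "- measure_pmf.prob D A / 2"] by simp
    show "0 \<le> 1 - measure_pmf.prob D A / 2"
      using measure_pmf.prob_le_1[of D A] by linarith
  qed
  also have "\<dots> = exp (- measure_pmf.prob D A * n / 2)"
    by (simp add: exp_of_nat_mult[symmetric] mult.commute)
  finally show ?thesis
    by (simp add: powr_minus divide_simps mult.commute)
qed

lemma upper_tail:
  assumes fin: "finite (set_pmf D)"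
  shows "measure_pmf.prob (iid D n) {xs. a \<le> real (cnt A xs)}
          \<le> exp (measure_pmf.prob D A * n) / 2 powr a"
proof -
  let ?g = "\<lambda>xs. prod_list (map (\<lambda>r. if r \<in> A then (2::real) else 1) xs)"
  have g: "?g xs = 2 powr (real (cnt A xs))" for xs
    by (simp add: prod_list_ind powr_realpow)
  have "{xs. a \<le> real (cnt A xs)} = {xs. 2 powr a \<le> ?g xs}"
    by (auto simp: g)
  hence "measure_pmf.prob (iid D n) {xs. a \<le> real (cnt A xs)}
      = measure_pmf.prob (iid D n) {xs. 2 powr a \<le> ?g xs}" by simp
  also have "\<dots> \<le> measure_pmf.expectation (iid D n) ?g / 2 powr a"
  proof -
    have "AE x in measure_pmf (iid D n). 0 \<le> ?g x"
      by (rule AE_I2) (rule prod_list_map_nonneg, simp)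
    moreover have "integrable (measure_pmf (iid D n)) ?g"
      by (simp add: integrable_measure_pmf_finite finite_set_pmf_iid fin)
    ultimately show ?thesis
      using integral_Markov_inequality_measure[where M="measure_pmf (iid D n)" and A=UNIV and u="?g" and c="2 powr a"]
      by simp
  qed
  also have "measure_pmf.expectation (iid D n) ?g = (1 + measure_pmf.prob D A) ^ n"
    by (subst expectation_iid_prod[OF fin]) (auto simp: expectation_ind_fun)
  also have "\<dots> \<le> exp (measure_pmf.prob D A) ^ n"
    by (rule power_mono) (auto simp: exp_ge_add_one_self add_nonneg_nonneg)
  also have "\<dots> = exp (measure_pmf.prob D A * n)"
    by (simp add: exp_of_nat_mult[symmetric] mult.commute)
  finally show ?thesis
    by (simp add: divide_right_mono)
qed


lemma prob_bind_pmf_finite: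
  assumes "finite (set_pmf M)"
  shows "measure_pmf.prob (bind_pmf M f) S = (\<Sum>x\<in>set_pmf M. pmf M x * measure_pmf.prob (f x) S)"
proof -
  have "ennreal (measure_pmf.prob (bind_pmf M f) S) = (\<integral>\<^sup>+x. ennreal (measure_pmf.prob (f x) S) \<partial>measure_pmf M)"
    by (simp add: measure_pmf.emeasure_eq_measure[symmetric])
  also have "\<dots> = (\<Sum>x\<in>set_pmf M. ennreal (measure_pmf.prob (f x) S) * ennreal (pmf M x))"
    by (rule nn_integral_measure_pmf_finite[OF assms]) simp
  also have "\<dots> = ennreal (\<Sum>x\<in>set_pmf M. pmf M x * measure_pmf.prob (f x) S)"
    by (subst sum_ennreal[symmetric]) (auto simp: ennreal_mult mult.commute)
  finally show ?thesis
    by (subst (asm) ennreal_inj) (auto intro!: sum_nonneg)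
qed

fun hdist :: "bool list \<Rightarrow> bool list \<Rightarrow> nat" where
  "hdist (a # x) (b # y) = (if a = b then 0 else 1) + hdist x y"
| "hdist _ _ = 0"

lemma hd_triangle: "length x = length y \<Longrightarrow> hdist x z \<le> hdist y z + hdist x y"
proof (induction x y arbitrary: z rule: hdist.induct)
  case (1 a x b y)
  show ?case
  proof (cases z)
    case Nil
    then show ?thesis by simp
  next
    case (Cons c z')
    then show ?thesis using "1.IH"[of z'] "1.prems" by auto
  qed
qed auto

lemma hd_sym: "hdist x y = hdist y x"
  by (induction x y rule: hdist.induct) auto

lemma hd_card: "length x = length y \<Longrightarrow> hdist x y = card {j. j < length x \<and> x ! j \<noteq> y ! j}"
proof (induction x y rule: hdist.induct)
  case (1 a x b y)
  have eq: "{j. j < length (a # x) \<and> (a # x) ! j \<noteq> (b # y) ! j}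
     = (if a = b then {} else {0}) \<union> Suc ` {j. j < length x \<and> x ! j \<noteq> y ! j}"
  proof (rule set_eqI)
    fix j show "j \<in> {j. j < length (a # x) \<and> (a # x) ! j \<noteq> (b # y) ! j}
      \<longleftrightarrow> j \<in> (if a = b then {} else {0}) \<union> Suc ` {j. j < length x \<and> x ! j \<noteq> y ! j}"
      by (cases j) (auto simp: inj_image_mem_iff)
  qed
  have "card ((if a = b then {} else {0}) \<union> Suc ` {j. j < length x \<and> x ! j \<noteq> y ! j})
     = (if a = b then 0 else 1) + card {j. j < length x \<and> x ! j \<noteq> y ! j}"
    by (subst card_Un_disjoint) (auto simp: card_image)
  then show ?case using 1 eq by simp
qed auto

lemma hd_eq_0: "length x = length y \<Longrightarrow> hdist x y = 0 \<Longrightarrow> x = y"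
  by (induction x y rule: hdist.induct) (auto split: if_splits)

lemma hd_self: "hdist x x = 0"
  by (induction x) auto

lemma hd_le_length: "hdist x y \<le> length y"
  by (induction x y rule: hdist.induct) auto

lemma cube_Suc: "cube (Suc l) = Cons True ` cube l \<union> Cons False ` cube l"
  by (auto simp: cube_def length_Suc_conv)

lemma finite_cube: "finite (cube l)"
proof -
  have "cube l = {xs. set xs \<subseteq> (UNIV::bool set) \<and> length xs = l}" by (auto simp: cube_def)
  thus ?thesis using finite_lists_length_eq[of "UNIV::bool set" l] by simp
qed

lemma card_cube: "card (cube l) = 2 ^ l"
proof -
  have "cube l = {xs. set xs \<subseteq> (UNIV::bool set) \<and> length xs = l}" by (auto simp: cube_def)
  thus ?thesis using card_lists_length_eq[of "UNIV::bool set" l] by simp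
qed

lemma sum_cube_hd:
  fixes c :: real
  shows "length x \<ge> l \<Longrightarrow> (\<Sum>p\<in>cube l. exp (- c * hdist x p)) = (1 + exp (- c)) ^ l"
proof (induction l arbitrary: x)
  case 0
  then show ?case by (simp add: cube_def)
next
  case (Suc l)
  then obtain a x' where x: "x = a # x'" and lx: "length x' \<ge> l" by (cases x) auto
  have "(\<Sum>p\<in>cube (Suc l). exp (- c * hdist x p))
     = (\<Sum>p\<in>Cons True ` cube l. exp (- c * hdist x p)) + (\<Sum>p\<in>Cons False ` cube l. exp (- c * hdist x p))"
    unfolding cube_Suc by (rule sum.union_disjoint) (auto simp: finite_cube)
  also have "\<dots> = (\<Sum>p\<in>cube l. exp (- c * hdist x (True # p))) + (\<Sum>p\<in>cube l. exp (- c * hdist x (False # p)))"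
    by (simp add: sum.reindex)
  also have "\<dots> = (\<Sum>p\<in>cube l. (1 + exp (-c)) * exp (- c * hdist x' p))"
    by (cases a) (auto simp: x sum.distrib[symmetric] algebra_simps exp_add[symmetric] intro!: sum.cong)
  also have "\<dots> = (1 + exp (-c)) ^ Suc l"
    by (subst sum_distrib_left[symmetric], subst Suc.IH[OF lx]) simp
  finally show ?case .
qed


definition wpmf :: "'a set \<Rightarrow> ('a \<Rightarrow> real) \<Rightarrow> 'a pmf" where
  "wpmf V w = embed_pmf (\<lambda>v. if v \<in> V then w v / sum w V else 0)"

context
  fixes V :: "'a set" and w :: "'a \<Rightarrow> real"
  assumes finV: "finite V" and neV: "V \<noteq> {}" and pos: "\<And>v. v \<in> V \<Longrightarrow> 0 < w v"
begin

lemma sum_w_pos: "0 < sum w V"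
  using finV neV pos by (simp add: sum_pos)

lemma pmf_wpmf: "pmf (wpmf V w) v = (if v \<in> V then w v / sum w V else 0)"
proof -
  let ?f = "\<lambda>v. if v \<in> V then w v / sum w V else 0"
  have nn: "\<And>x. 0 \<le> ?f x" using pos sum_w_pos by (auto intro: less_imp_le)
  have s1: "(\<Sum>x\<in>V. ?f x) = 1"
  proof -
    have "(\<Sum>x\<in>V. ?f x) = (\<Sum>x\<in>V. w x / sum w V)" by (rule sum.cong) auto
    also have "\<dots> = (\<Sum>x\<in>V. w x) / sum w V" by (rule sum_divide_distrib[symmetric])
    also have "\<dots> = 1" using sum_w_pos by (simp del: sum_divide_distrib)
    finally show ?thesis .
  qed
  have "(\<integral>\<^sup>+x. ennreal (?f x) \<partial>count_space UNIV) = (\<Sum>x\<in>V. ennreal (?f x))"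
    by (rule nn_integral_count_space') (auto simp: finV)
  also have "\<dots> = ennreal (\<Sum>x\<in>V. ?f x)"
    using nn by (intro sum_ennreal) (metis (full_types))
  also have "\<dots> = 1" using s1 by simp
  finally have "(\<integral>\<^sup>+x. ennreal (?f x) \<partial>count_space UNIV) = 1" .
  then show ?thesis unfolding wpmf_def
    by (subst pmf_embed_pmf) (use nn in auto)
qed

lemma set_pmf_wpmf: "set_pmf (wpmf V w) = V"
  using pos sum_w_pos by (auto simp: set_pmf_eq pmf_wpmf dest: less_imp_neq[symmetric] split: if_splits)

lemma prob_wpmf: "measure_pmf.prob (wpmf V w) A = (\<Sum>v\<in>A \<inter> V. w v) / sum w V"
proof -
  have "measure_pmf.prob (wpmf V w) A = measure_pmf.prob (wpmf V w) (A \<inter> V)"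
    using measure_Int_set_pmf[of "wpmf V w" A] by (simp add: set_pmf_wpmf)
  also have "\<dots> = (\<Sum>v\<in>A \<inter> V. pmf (wpmf V w) v)"
    by (rule measure_measure_pmf_finite) (simp add: finV)
  also have "\<dots> = (\<Sum>v\<in>A \<inter> V. w v / sum w V)"
    by (rule sum.cong) (auto simp: pmf_wpmf)
  finally show ?thesis by (simp add: sum_divide_distrib)
qed

lemma util_wpmf:
  assumes "c \<in> V"
  shows "measure_pmf.prob (wpmf V w) A \<le> (\<Sum>v\<in>A \<inter> V. w v) / w c"
proof -
  have "w c \<le> sum w V"
    using assms finV pos by (intro member_le_sum) (auto intro: less_imp_le)
  moreover have "0 \<le> (\<Sum>v\<in>A \<inter> V. w v)" by (rule sum_nonneg) (auto intro: less_imp_le[OF pos])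
  ultimately show ?thesis
    unfolding prob_wpmf using pos[OF assms] sum_w_pos by (intro frac_le) auto
qed

end

lemma dp_wpmf:
  assumes finV: "finite V" and neV: "V \<noteq> {}"
    and pos: "\<And>v. v \<in> V \<Longrightarrow> 0 < w v" and pos': "\<And>v. v \<in> V \<Longrightarrow> 0 < w' v"
    and r1: "\<And>v. v \<in> V \<Longrightarrow> w v \<le> c * w' v" and r2: "\<And>v. v \<in> V \<Longrightarrow> w' v \<le> c * w v"
  shows "measure_pmf.prob (wpmf V w) A \<le> c^2 * measure_pmf.prob (wpmf V w') A"
proof -
  have c0: "0 \<le> c"
  proof -
    obtain v where "v \<in> V" using neV by auto
    then have "0 < c * w' v" using r1[of v] pos[of v] by linarith
    then show ?thesis using pos'[OF \<open>v \<in> V\<close>] by (auto simp: zero_less_mult_iff)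
  qed
  have s1: "(\<Sum>v\<in>A \<inter> V. w v) \<le> c * (\<Sum>v\<in>A \<inter> V. w' v)"
    by (simp add: sum_distrib_left) (rule sum_mono, simp add: r1)
  have s2: "sum w' V \<le> c * sum w V"
    by (simp add: sum_distrib_left) (rule sum_mono, simp add: r2)
  have S: "0 < sum w V" "0 < sum w' V"
    using finV neV pos pos' by (auto simp: sum_pos)
  have n': "0 \<le> (\<Sum>v\<in>A \<inter> V. w' v)" by (rule sum_nonneg) (auto intro: less_imp_le[OF pos'])
  have "(\<Sum>v\<in>A \<inter> V. w v) / sum w V \<le> c * (\<Sum>v\<in>A \<inter> V. w' v) / sum w V"
    using s1 S by (simp add: divide_right_mono)
  also have "\<dots> \<le> c * (\<Sum>v\<in>A \<inter> V. w' v) / (sum w' V / c)"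
  proof (cases "c = 0")
    case True then show ?thesis by simp
  next
    case False
    then have "sum w' V / c \<le> sum w V" using s2 c0 by (simp add: divide_simps mult.commute)
    moreover have "0 < sum w' V / c" using S False c0 by simp
    ultimately show ?thesis using c0 n' by (intro frac_le) (auto intro: mult_nonneg_nonneg)
  qed
  also have "\<dots> = c^2 * ((\<Sum>v\<in>A \<inter> V. w' v) / sum w' V)"
    using S by (simp add: power2_eq_square field_simps)
  finally show ?thesis
    using prob_wpmf[OF finV neV pos] prob_wpmf[OF finV neV pos'] by simp
qed


definition Emp :: "hyp \<Rightarrow> example list \<Rightarrow> nat" where
  "Emp h Ds = cnt {(x, y). h x \<noteq> y} Ds"

definition idxsets :: "nat \<Rightarrow> nat \<Rightarrow> nat set set" where
  "idxsets t n = {I. I \<subseteq> {..<n} \<and> card I = t}"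

definition St :: "nat \<Rightarrow> example list \<Rightarrow> bool list \<Rightarrow> nat" where
  "St t Ds p = Min ((\<lambda>I. \<Sum>i\<in>I. hdist (fst (Ds ! i)) p) ` idxsets t (length Ds))"

definition score :: "(bool list \<Rightarrow> hyp) \<Rightarrow> nat \<Rightarrow> example list \<Rightarrow> bool list \<Rightarrow> real" where
  "score hy t Ds p = real (Emp (hy p) Ds) + real (St t Ds p)"

definition mech :: "bool list set \<Rightarrow> (bool list \<Rightarrow> hyp) \<Rightarrow> nat \<Rightarrow> real \<Rightarrow> example list \<Rightarrow> hyp pmf" where
  "mech V hy t lam Ds = map_pmf hy (wpmf V (\<lambda>p. exp (- lam * score hy t Ds p)))"

lemma finite_idxsets: "finite (idxsets t n)"
  unfolding idxsets_def by (rule finite_subset[of _ "Pow {..<n}"]) auto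

lemma idxsets_ne: "t \<le> n \<Longrightarrow> idxsets t n \<noteq> {}"
  unfolding idxsets_def by (rule ccontr) (auto dest: spec[of _ "{..<t}"])

lemma cnt_card: "cnt A xs = card {i. i < length xs \<and> xs ! i \<in> A}"
  unfolding cnt_def by (rule length_filter_conv_card)

lemma St_le:
  assumes "I \<in> idxsets t (length Ds)"
  shows "St t Ds p \<le> (\<Sum>i\<in>I. hdist (fst (Ds ! i)) p)"
  unfolding St_def using assms finite_idxsets by (intro Min_le) auto

lemma St_attained:
  assumes "t \<le> length Ds"
  obtains I where "I \<in> idxsets t (length Ds)" "St t Ds p = (\<Sum>i\<in>I. hdist (fst (Ds ! i)) p)"
proof -
  have "St t Ds p \<in> (\<lambda>I. \<Sum>i\<in>I. hdist (fst (Ds ! i)) p) ` idxsets t (length Ds)"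
    unfolding St_def using finite_idxsets idxsets_ne[OF assms] by (intro Min_in) auto
  then show ?thesis using that by blast
qed

locale neighb =
  fixes d n i :: nat and Ds Ds' :: "example list"
  assumes len: "length Ds = n" "length Ds' = n" and i: "i < n"
    and rec: "\<forall>r\<in>set Ds. record_on d r" "\<forall>r\<in>set Ds'. record_on d r"
    and same: "\<forall>j<n. j \<noteq> i \<longrightarrow> Ds ! j = Ds' ! j"
begin

lemma lenx: "j < n \<Longrightarrow> length (fst (Ds ! j)) = d" "j < n \<Longrightarrow> length (fst (Ds' ! j)) = d"
  using rec len by (auto simp: record_on_def cube_def)

lemma hdist_ham: "hdist (fst (Ds ! i)) (fst (Ds' ! i)) \<le> ham d (Ds ! i) (Ds' ! i)"
  using lenx[OF i] by (simp add: ham_def hd_card)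

lemma ham_pos: "Ds ! i \<noteq> Ds' ! i \<Longrightarrow> 1 \<le> ham d (Ds ! i) (Ds' ! i)"
proof -
  assume ne: "Ds ! i \<noteq> Ds' ! i"
  show ?thesis
  proof (cases "snd (Ds ! i) = snd (Ds' ! i)")
    case True
    then have "fst (Ds ! i) \<noteq> fst (Ds' ! i)" using ne by (cases "Ds ! i", cases "Ds' ! i") auto
    then have "hdist (fst (Ds ! i)) (fst (Ds' ! i)) \<noteq> 0"
      using hd_eq_0 lenx[OF i] by metis
    then show ?thesis using hdist_ham by linarith
  next
    case False
    then show ?thesis by (simp add: ham_def)
  qed
qed

lemma eq_if: "Ds ! i = Ds' ! i \<Longrightarrow> Ds = Ds'"
  using same len by (metis nth_equalityI)

lemma cnt_change: "cnt A Ds \<le> cnt A Ds' + 1"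
proof -
  have "{j. j < length Ds \<and> Ds ! j \<in> A} \<subseteq> insert i {j. j < length Ds' \<and> Ds' ! j \<in> A}"
    using same len by auto
  then have "card {j. j < length Ds \<and> Ds ! j \<in> A} \<le> card (insert i {j. j < length Ds' \<and> Ds' ! j \<in> A})"
    by (intro card_mono) auto
  also have "\<dots> \<le> card {j. j < length Ds' \<and> Ds' ! j \<in> A} + 1"
    by (simp add: card_insert_if)
  finally show ?thesis by (simp add: cnt_card)
qed

lemma St_change:
  assumes tn: "t \<le> n" and lp: "length p \<le> d"
  shows "St t Ds p \<le> St t Ds' p + hdist (fst (Ds ! i)) (fst (Ds' ! i))"
proof -
  let ?h = "hdist (fst (Ds ! i)) (fst (Ds' ! i))"
  obtain I where I: "I \<in> idxsets t (length Ds')" "St t Ds' p = (\<Sum>j\<in>I. hdist (fst (Ds' ! j)) p)"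
    using St_attained[of t Ds' p] tn len by auto
  have Isub: "I \<subseteq> {..<n}" using I len by (auto simp: idxsets_def)
  have fI: "finite I" using Isub finite_subset by blast
  have "St t Ds p \<le> (\<Sum>j\<in>I. hdist (fst (Ds ! j)) p)"
    using I len by (intro St_le) auto
  also have "\<dots> \<le> (\<Sum>j\<in>I. hdist (fst (Ds' ! j)) p + (if j = i then ?h else 0))"
  proof (rule sum_mono)
    fix j assume "j \<in> I"
    then have jn: "j < n" using Isub by auto
    show "hdist (fst (Ds ! j)) p \<le> hdist (fst (Ds' ! j)) p + (if j = i then ?h else 0)"
    proof (cases "j = i")
      case True
      then show ?thesis using hd_triangle[of "fst (Ds ! i)" "fst (Ds' ! i)" p] lenx[OF i] by simp
    next
      case False
      then show ?thesis using same jn by simp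
    qed
  qed
  also have "\<dots> = St t Ds' p + (\<Sum>j\<in>I. (if j = i then ?h else 0))"
    using I by (simp add: sum.distrib)
  also have "(\<Sum>j\<in>I. (if j = i then ?h else 0)) \<le> ?h"
    using fI by (simp add: sum.delta)
  finally show ?thesis by simp
qed

end

lemma neighb_sym: "neighb d n i Ds Ds' \<Longrightarrow> neighb d n i Ds' Ds"
  unfolding neighb_def by auto

lemma (in neighb) score_change:
  assumes tn: "t \<le> n" and lp: "length p \<le> d" and ne: "Ds ! i \<noteq> Ds' ! i"
  shows "score hy t Ds p \<le> score hy t Ds' p + 2 * ham d (Ds ! i) (Ds' ! i)"
proof -
  have "Emp (hy p) Ds \<le> Emp (hy p) Ds' + 1" unfolding Emp_def by (rule cnt_change)
  moreover have "St t Ds p \<le> St t Ds' p + ham d (Ds ! i) (Ds' ! i)"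
    using St_change[OF tn lp] hdist_ham by linarith
  moreover have "1 \<le> ham d (Ds ! i) (Ds' ! i)" using ham_pos[OF ne] .
  ultimately show ?thesis unfolding score_def by linarith
qed

lemma mech_dp:
  assumes finV: "finite V" and neV: "V \<noteq> {}" and lV: "\<And>p. p \<in> V \<Longrightarrow> length p \<le> d"
    and tn: "t \<le> n" and eps: "0 \<le> \<epsilon>"
  shows "nabla0_dp d n \<epsilon> (mech V hy t (\<epsilon> / 4))"
  unfolding nabla0_dp_def
proof (intro allI impI)
  fix Ds Ds' i S
  assume A: "length Ds = n \<and> length Ds' = n \<and> i < n \<and> (\<forall>r\<in>set Ds. record_on d r) \<and>
       (\<forall>r\<in>set Ds'. record_on d r) \<and> (\<forall>j<n. j \<noteq> i \<longrightarrow> Ds ! j = Ds' ! j)"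
  then interpret N: neighb d n i Ds Ds' by unfold_locales auto
  interpret N': neighb d n i Ds' Ds using neighb_sym[OF N.neighb_axioms] .
  show "measure_pmf.prob (mech V hy t (\<epsilon> / 4) Ds) S
        \<le> exp (\<epsilon> * real (ham d (Ds ! i) (Ds' ! i))) * measure_pmf.prob (mech V hy t (\<epsilon> / 4) Ds') S"
  proof (cases "Ds ! i = Ds' ! i")
    case True
    then show ?thesis using N.eq_if by (simp add: ham_def)
  next
    case False
    let ?h = "real (ham d (Ds ! i) (Ds' ! i))"
    let ?w = "\<lambda>p. exp (- (\<epsilon> / 4) * score hy t Ds p)"
    let ?w' = "\<lambda>p. exp (- (\<epsilon> / 4) * score hy t Ds' p)"
    have hsym: "ham d (Ds' ! i) (Ds ! i) = ham d (Ds ! i) (Ds' ! i)"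
    proof -
      have "{j. j < d \<and> fst (Ds' ! i) ! j \<noteq> fst (Ds ! i) ! j} = {j. j < d \<and> fst (Ds ! i) ! j \<noteq> fst (Ds' ! i) ! j}"
        by auto
      then show ?thesis unfolding ham_def by auto
    qed
    have r1: "?w p \<le> exp (\<epsilon> / 2 * ?h) * ?w' p" if "p \<in> V" for p
    proof -
      have "score hy t Ds' p \<le> score hy t Ds p + 2 * ?h"
        using N'.score_change[OF tn lV[OF that]] False hsym by auto
      then have "\<epsilon> / 4 * score hy t Ds' p \<le> \<epsilon> / 4 * (score hy t Ds p + 2 * ?h)"
        using eps by (intro mult_left_mono) auto
      then have "- (\<epsilon> / 4) * score hy t Ds p \<le> \<epsilon> / 2 * ?h + - (\<epsilon> / 4) * score hy t Ds' p"
        by (simp add: algebra_simps)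
      then show ?thesis by (simp add: exp_add[symmetric])
    qed
    have r2: "?w' p \<le> exp (\<epsilon> / 2 * ?h) * ?w p" if "p \<in> V" for p
    proof -
      have "score hy t Ds p \<le> score hy t Ds' p + 2 * ?h"
        using N.score_change[OF tn lV[OF that]] False by auto
      then have "\<epsilon> / 4 * score hy t Ds p \<le> \<epsilon> / 4 * (score hy t Ds' p + 2 * ?h)"
        using eps by (intro mult_left_mono) auto
      then have "- (\<epsilon> / 4) * score hy t Ds' p \<le> \<epsilon> / 2 * ?h + - (\<epsilon> / 4) * score hy t Ds p"
        by (simp add: algebra_simps)
      then show ?thesis by (simp add: exp_add[symmetric])
    qed
    have "measure_pmf.prob (wpmf V ?w) (hy -` S) \<le> (exp (\<epsilon> / 2 * ?h))^2 * measure_pmf.prob (wpmf V ?w') (hy -` S)"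
      by (rule dp_wpmf[OF finV neV _ _ r1 r2]) auto
    also have "(exp (\<epsilon> / 2 * ?h))^2 = exp (\<epsilon> * ?h)"
      by (simp add: power2_eq_square exp_add[symmetric])
    finally show ?thesis unfolding mech_def by simp
  qed
qed


lemma mech_util:
  assumes finV: "finite V" and neV: "V \<noteq> {}" and c: "c \<in> V" and lam: "0 \<le> lam"
    and bad: "\<And>p. p \<in> V \<Longrightarrow> hy p \<notin> G \<Longrightarrow> A \<le> real (Emp (hy p) Ds)"
  shows "measure_pmf.prob (mech V hy t lam Ds) (- G)
     \<le> exp (- lam * A) * (\<Sum>p\<in>V. exp (- lam * St t Ds p)) / exp (- lam * score hy t Ds c)"
proof -
  let ?w = "\<lambda>p. exp (- lam * score hy t Ds p)"
  let ?B = "hy -` (- G)"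
  have "measure_pmf.prob (mech V hy t lam Ds) (- G) = measure_pmf.prob (wpmf V ?w) ?B"
    unfolding mech_def by simp
  also have "\<dots> \<le> (\<Sum>p\<in>?B \<inter> V. ?w p) / ?w c"
    by (rule util_wpmf[OF finV neV _ c]) auto
  also have "(\<Sum>p\<in>?B \<inter> V. ?w p) \<le> (\<Sum>p\<in>?B \<inter> V. exp (- lam * A) * exp (- lam * St t Ds p))"
  proof (rule sum_mono)
    fix p assume p: "p \<in> ?B \<inter> V"
    have "A \<le> real (Emp (hy p) Ds)" using bad p by auto
    then have "lam * A \<le> lam * real (Emp (hy p) Ds)" using lam by (rule mult_left_mono)
    then have "- lam * score hy t Ds p \<le> - lam * A + - lam * St t Ds p"
      unfolding score_def by (simp add: algebra_simps)
    then show "?w p \<le> exp (- lam * A) * exp (- lam * St t Ds p)"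
      by (simp add: exp_add[symmetric])
  qed
  also have "\<dots> \<le> (\<Sum>p\<in>V. exp (- lam * A) * exp (- lam * St t Ds p))"
    by (rule sum_mono2) (auto simp: finV)
  also have "\<dots> = exp (- lam * A) * (\<Sum>p\<in>V. exp (- lam * St t Ds p))"
    by (simp add: sum_distrib_left)
  finally show ?thesis by (simp add: divide_right_mono)
qed

lemma exp_sum_amgm:
  fixes a :: "nat \<Rightarrow> real"
  assumes "finite I" "card I = t" "1 \<le> t"
  shows "exp (- lam * (\<Sum>i\<in>I. a i)) \<le> (1 / t) * (\<Sum>i\<in>I. exp (- lam * t * a i))"
proof -
  have ne: "I \<noteq> {}" using assms by auto
  have "exp (\<Sum>i\<in>I. (1 / t) *\<^sub>R (- lam * t * a i)) \<le> (\<Sum>i\<in>I. (1 / t) * exp (- lam * t * a i))"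
    by (rule convex_on_sum[OF assms(1) ne exp_convex]) (use assms in auto)
  moreover have "(\<Sum>i\<in>I. (1 / t) *\<^sub>R (- lam * t * a i)) = - lam * (\<Sum>i\<in>I. a i)"
    using assms by (simp add: sum_distrib_left)
  ultimately show ?thesis by (simp add: sum_distrib_left)
qed

lemma sum_St_bound:
  fixes lam :: real
  assumes finV: "finite V" and t1: "1 \<le> t" and tn: "t \<le> length Ds" and lam: "0 \<le> lam"
  shows "(\<Sum>p\<in>V. exp (- lam * St t Ds p))
     \<le> (1 / t) * (\<Sum>i<length Ds. \<Sum>p\<in>V. exp (- lam * t * hdist (fst (Ds ! i)) p))"
proof -
  have "exp (- lam * St t Ds p) \<le> (1 / t) * (\<Sum>i<length Ds. exp (- lam * t * hdist (fst (Ds ! i)) p))" for p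
  proof -
    obtain I where I: "I \<in> idxsets t (length Ds)" "St t Ds p = (\<Sum>i\<in>I. hdist (fst (Ds ! i)) p)"
      using St_attained[OF tn] by blast
    have Isub: "I \<subseteq> {..<length Ds}" and cI: "card I = t" using I by (auto simp: idxsets_def)
    have fI: "finite I" using Isub finite_subset by blast
    have "exp (- lam * St t Ds p) = exp (- lam * (\<Sum>i\<in>I. real (hdist (fst (Ds ! i)) p)))"
      using I by simp
    also have "\<dots> \<le> (1 / t) * (\<Sum>i\<in>I. exp (- lam * t * hdist (fst (Ds ! i)) p))"
      by (rule exp_sum_amgm[OF fI cI t1])
    also have "\<dots> \<le> (1 / t) * (\<Sum>i<length Ds. exp (- lam * t * hdist (fst (Ds ! i)) p))"
      by (intro mult_left_mono sum_mono2 Isub) auto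
    finally show ?thesis .
  qed
  then have "(\<Sum>p\<in>V. exp (- lam * St t Ds p))
      \<le> (\<Sum>p\<in>V. (1 / t) * (\<Sum>i<length Ds. exp (- lam * t * hdist (fst (Ds ! i)) p)))"
    by (intro sum_mono) auto
  also have "\<dots> = (1 / t) * (\<Sum>i<length Ds. \<Sum>p\<in>V. exp (- lam * t * hdist (fst (Ds ! i)) p))"
    by (simp add: sum_distrib_left[symmetric] sum.swap[of _ V] sum_divide_distrib[symmetric])
  finally show ?thesis .
qed

lemma exp_pow_bound:
  fixes c :: real
  assumes "ln (real d) \<le> c" "1 \<le> d"
  shows "(1 + exp (- c)) ^ d \<le> exp 1"
proof -
  have "exp (- c) \<le> 1 / d"
  proof -
    have "exp (- c) \<le> exp (- ln (real d))" using assms by simp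
    also have "\<dots> = 1 / d" using assms by (simp add: exp_minus exp_ln inverse_eq_divide)
    finally show ?thesis .
  qed
  have "(1 + exp (- c)) ^ d \<le> exp (exp (- c)) ^ d"
    by (rule power_mono) (auto simp: exp_ge_add_one_self add_nonneg_nonneg)
  also have "\<dots> = exp (d * exp (- c))" by (simp add: exp_of_nat_mult[symmetric])
  also have "\<dots> \<le> exp 1"
  proof -
    have "d * exp (- c) \<le> d * (1 / d)"
      using \<open>exp (- c) \<le> 1 / d\<close> by (intro mult_left_mono) auto
    then show ?thesis using assms by simp
  qed
  finally show ?thesis .
qed

definition prefs :: "nat \<Rightarrow> bool list set" where
  "prefs d = {p. length p \<le> d}"

lemma prefs_Union: "prefs d = (\<Union>l\<in>{..d}. cube l)"
  by (auto simp: prefs_def cube_def)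

lemma finite_prefs: "finite (prefs d)"
  unfolding prefs_Union by (auto simp: finite_cube)

lemma finite_len: "finite {x::bool list. length x = i}"
  using finite_cube[of i] by (simp add: cube_def)

lemma sum_prefs_hd:
  fixes c :: real
  assumes "length x = d" "0 \<le> c"
  shows "(\<Sum>p\<in>prefs d. exp (- c * hdist x p)) \<le> (d + 1) * (1 + exp (- c)) ^ d"
proof -
  have "(\<Sum>p\<in>prefs d. exp (- c * hdist x p)) = (\<Sum>l\<le>d. \<Sum>p\<in>cube l. exp (- c * hdist x p))"
    unfolding prefs_Union by (rule sum.UNION_disjoint) (auto simp: finite_cube cube_def finite_len)
  also have "\<dots> = (\<Sum>l\<le>d. (1 + exp (- c)) ^ l)"
    using assms by (intro sum.cong refl sum_cube_hd) auto
  also have "\<dots> \<le> (\<Sum>l\<le>d. (1 + exp (- c)) ^ d)"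
    by (intro sum_mono power_increasing) auto
  also have "\<dots> = (d + 1) * (1 + exp (- c)) ^ d" by simp
  finally show ?thesis by (simp add: add.commute)
qed


lemma ln2_le: "ln (2::real) \<le> 3/4"
proof -
  have "(2::real) \<le> (35/32)^8" by (simp add: power_divide divide_simps)
  also have "(35/32::real) \<le> exp (3/32)" using exp_ge_add_one_self[of "3/32::real"] by simp
  then have "(35/32::real)^8 \<le> exp (3/32)^8" by (rule power_mono) simp
  also have "exp (3/32::real)^8 = exp (3/4)" by (simp add: exp_of_nat_mult[symmetric])
  finally have "2 \<le> exp (3/4::real)" .
  then show ?thesis by (metis exp_le_cancel_iff exp_ln zero_less_numeral)
qed

lemma ln2_ge: "1/2 \<le> ln (2::real)"
proof -
  have "1/2 \<le> exp (-1/2::real)" using exp_ge_add_one_self[of "-1/2::real"] by simp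
  then have "exp (1/2::real) \<le> 2"
    by (simp add: exp_minus field_simps)
  then show ?thesis by (metis exp_le_cancel_iff exp_ln zero_less_numeral)
qed

lemma lower_tail2:
  assumes fin: "finite (set_pmf D)" and q0: "0 \<le> q0" "q0 \<le> measure_pmf.prob D A"
  shows "measure_pmf.prob (iid D n) {xs. real (cnt A xs) \<le> q0 * n / 2} \<le> exp (- q0 * n / 8)"
proof -
  have "measure_pmf.prob (iid D n) {xs. real (cnt A xs) \<le> q0 * n / 2}
      \<le> 2 powr (q0 * n / 2) * exp (- measure_pmf.prob D A * n / 2)"
    by (rule lower_tail[OF fin])
  also have "\<dots> \<le> exp (ln 2 * (q0 * n / 2)) * exp (- q0 * n / 2)"
    using q0 by (auto simp: powr_def intro!: mult_mono mult_right_mono)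
  also have "\<dots> = exp ((ln 2 - 1) * (q0 * n / 2))"
    by (simp add: exp_add[symmetric] algebra_simps)
  also have "\<dots> \<le> exp (- q0 * n / 8)"
  proof -
    have "(ln 2 - 1) * (q0 * n / 2) \<le> (3/4 - 1) * (q0 * n / 2)"
      using ln2_le q0 by (intro mult_right_mono) auto
    then show ?thesis by simp
  qed
  finally show ?thesis .
qed

lemma upper_tail2:
  assumes fin: "finite (set_pmf D)" and q1: "0 \<le> q1" "measure_pmf.prob D A \<le> q1"
  shows "measure_pmf.prob (iid D n) {xs. 3 * q1 * n \<le> real (cnt A xs)} \<le> exp (- q1 * n / 2)"
proof -
  have "measure_pmf.prob (iid D n) {xs. 3 * q1 * n \<le> real (cnt A xs)}
      \<le> exp (measure_pmf.prob D A * n) / 2 powr (3 * q1 * n)"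
    by (rule upper_tail[OF fin])
  also have "\<dots> = exp (measure_pmf.prob D A * n) / exp (ln 2 * (3 * q1 * n))"
    by (simp add: powr_def)
  also have "\<dots> \<le> exp (q1 * n) / exp (ln 2 * (3 * q1 * n))"
    using q1 by (intro divide_right_mono) (auto intro!: mult_right_mono)
  also have "\<dots> = exp ((1 - 3 * ln 2) * (q1 * n))"
    by (simp add: exp_diff[symmetric] algebra_simps)
  also have "\<dots> \<le> exp (- q1 * n / 2)"
  proof -
    have "(1 - 3 * ln 2) * (q1 * n) \<le> (1 - 3 * (1/2)) * (q1 * n)"
      using ln2_ge q1 by (intro mult_right_mono) auto
    then show ?thesis by simp
  qed
  finally show ?thesis .
qed

lemma cnt_mono: "(\<And>r. r \<in> set xs \<Longrightarrow> r \<in> A \<Longrightarrow> r \<in> B) \<Longrightarrow> cnt A xs \<le> cnt B xs"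
  unfolding cnt_def by (induction xs) auto

lemma cnt_le_length: "cnt A xs \<le> length xs"
  unfolding cnt_def by simp

lemma cnt_subset:
  assumes "t \<le> cnt A xs"
  obtains I where "I \<subseteq> {..<length xs}" "card I = t" "\<And>i. i \<in> I \<Longrightarrow> xs ! i \<in> A"
proof -
  have "t \<le> card {i. i < length xs \<and> xs ! i \<in> A}" using assms by (simp add: cnt_card)
  then obtain I where "I \<subseteq> {i. i < length xs \<and> xs ! i \<in> A}" "card I = t"
    by (meson obtain_subset_with_card_n)
  then show ?thesis using that by auto
qed

lemma St_bound_by:
  assumes "t \<le> cnt A Ds" "\<And>r. r \<in> A \<Longrightarrow> hdist (fst r) p \<le> k"
  shows "St t Ds p \<le> t * k"
proof -
  obtain I where I: "I \<subseteq> {..<length Ds}" "card I = t" "\<And>i. i \<in> I \<Longrightarrow> Ds ! i \<in> A"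
    using cnt_subset[OF assms(1)] by blast
  have "St t Ds p \<le> (\<Sum>i\<in>I. hdist (fst (Ds ! i)) p)"
    using I by (intro St_le) (auto simp: idxsets_def)
  also have "\<dots> \<le> (\<Sum>i\<in>I. k)" using I assms(2) by (intro sum_mono) auto
  also have "\<dots> = t * k" using I by simp
  finally show ?thesis .
qed

lemma pac_from_good:
  assumes fin: "finite (set_pmf D)"
    and PG: "measure_pmf.prob (iid D n) Good \<ge> (19/20)"
    and MG: "\<And>Ds. Ds \<in> Good \<Longrightarrow> Ds \<in> set_pmf (iid D n) \<Longrightarrow> measure_pmf.prob (M Ds) G \<ge> (19/20)"
  shows "measure_pmf.prob (bind_pmf (iid D n) M) G \<ge> 0.9"
proof -
  let ?S = "set_pmf (iid D n)"
  have fS: "finite ?S" by (rule finite_set_pmf_iid[OF fin])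
  have "measure_pmf.prob (bind_pmf (iid D n) M) G = (\<Sum>x\<in>?S. pmf (iid D n) x * measure_pmf.prob (M x) G)"
    by (rule prob_bind_pmf_finite[OF fS])
  also have "\<dots> \<ge> (\<Sum>x\<in>?S \<inter> Good. pmf (iid D n) x * measure_pmf.prob (M x) G)"
    by (rule sum_mono2) (auto simp: fS)
  also have "(\<Sum>x\<in>?S \<inter> Good. pmf (iid D n) x * measure_pmf.prob (M x) G) \<ge> (\<Sum>x\<in>?S \<inter> Good. pmf (iid D n) x * (19/20))"
    using MG by (intro sum_mono mult_left_mono) auto
  also have "(\<Sum>x\<in>?S \<inter> Good. pmf (iid D n) x * (19/20)) = (19/20) * measure_pmf.prob (iid D n) (Good \<inter> ?S)"
  proof -
    have "(\<Sum>x\<in>?S \<inter> Good. pmf (iid D n) x * (19/20)) = (\<Sum>x\<in>?S \<inter> Good. pmf (iid D n) x) * (19/20)"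
      by (rule sum_distrib_right[symmetric])
    also have "(\<Sum>x\<in>?S \<inter> Good. pmf (iid D n) x) = measure_pmf.prob (iid D n) (Good \<inter> ?S)"
      by (subst measure_measure_pmf_finite) (auto simp: fS Int_commute)
    finally show ?thesis by simp
  qed
  also have "measure_pmf.prob (iid D n) (Good \<inter> ?S) = measure_pmf.prob (iid D n) Good"
    by (rule measure_Int_set_pmf)
  finally have "(19/20) * measure_pmf.prob (iid D n) Good \<le> measure_pmf.prob (bind_pmf (iid D n) M) G" .
  moreover have "(19/20) * (19/20) \<le> (19/20) * measure_pmf.prob (iid D n) Good"
    using PG by (intro mult_left_mono) auto
  ultimately show ?thesis by linarith
qed


lemma mech_allgood:
  assumes finV: "finite V" and neV: "V \<noteq> {}" and good: "\<And>p. p \<in> V \<Longrightarrow> hy p \<in> G"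
  shows "measure_pmf.prob (mech V hy t lam Ds) (- G) = 0"
proof -
  have "measure_pmf.prob (mech V hy t lam Ds) (- G)
     = measure_pmf.prob (wpmf V (\<lambda>p. exp (- lam * score hy t Ds p))) (hy -` (- G))"
    unfolding mech_def by simp
  also have "\<dots> = (\<Sum>v\<in>(hy -` (- G)) \<inter> V. exp (- lam * score hy t Ds v)) / (\<Sum>v\<in>V. exp (- lam * score hy t Ds v))"
    by (rule prob_wpmf[OF finV neV]) auto
  also have "(hy -` (- G)) \<inter> V = {}" using good by auto
  finally show ?thesis by simp
qed

lemma set_pmf_mech:
  assumes "finite V" "V \<noteq> {}"
  shows "set_pmf (mech V hy t lam Ds) = hy ` V"
  unfolding mech_def using assms by (simp add: set_pmf_wpmf)

lemma aux_cancel: "(a::real) \<noteq> 0 \<Longrightarrow> b \<noteq> 0 \<Longrightarrow> a / b * X * Y * (Z / a * (b * W)) = (X * Y) * Z * W"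
  by (simp add: field_simps)

locale params =
  fixes \<epsilon> \<alpha> :: real and d t r n :: nat
  assumes eps: "0 < \<epsilon>" "\<epsilon> \<le> 1" and alpha: "0 < \<alpha>" "\<alpha> < 1" and d1: "1 \<le> d"
    and tL: "ln (real d + 1) + ln (1 / \<alpha>) + 5 \<le> \<epsilon> / 4 * t"
    and r: "64 / \<alpha> \<le> 2 ^ r" "1 \<le> r"
    and n1: "64 * t * r \<le> \<alpha> * n" and n2: "\<alpha> * n \<le> 65 * t * r"
begin

definition L :: real where "L = ln (real d + 1) + ln (1 / \<alpha>) + 5"

lemma L_ge: "5 \<le> L" "ln (1 / \<alpha>) + 5 \<le> L" "ln (real d) \<le> L"
proof -
  have a: "0 \<le> ln (1 / \<alpha>)" using alpha by simp
  have b: "0 \<le> ln (real d + 1)" by simp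
  show "5 \<le> L" "ln (1 / \<alpha>) + 5 \<le> L" using a b by (auto simp: L_def)
  have "ln (real d) \<le> ln (real d + 1)" using d1 by simp
  then show "ln (real d) \<le> L" using a by (auto simp: L_def)
qed

lemma tL': "L \<le> \<epsilon> / 4 * t" using tL by (simp add: L_def)

lemma t_pos: "1 \<le> t"
proof -
  have "5 \<le> \<epsilon> / 4 * t" using tL' L_ge by linarith
  also have "\<dots> \<le> 1 / 4 * t" using eps by (intro mult_right_mono) auto
  finally show ?thesis by simp
qed

lemma t_small: "real t * r \<le> \<alpha> * n / 64" using n1 by simp

lemma t_le_an: "real t \<le> \<alpha> * n / 64"
proof -
  have "real t * 1 \<le> real t * r" by (rule mult_left_mono) (use r(2) in auto)
  then show ?thesis using t_small by linarith
qed

lemma t_le_n: "t \<le> n"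
proof -
  have "\<alpha> * n \<le> n" using alpha by (intro mult_left_le_one_le) auto
  then show ?thesis using t_le_an by linarith
qed

lemma fail_small: "exp (- \<alpha> * n / 128) \<le> \<alpha> / 1000"
proof -
  have "2 * L \<le> 2 * (\<epsilon> / 4 * t)" using tL' by simp
  also have "\<dots> \<le> 2 * (1 / 4 * t)" using eps by (intro mult_left_mono mult_right_mono) auto
  also have "\<dots> \<le> \<alpha> * n / 128" using t_le_an by linarith
  finally have "ln (1 / \<alpha>) + 10 \<le> \<alpha> * n / 128" using L_ge by linarith
  then have "exp (- \<alpha> * n / 128) \<le> exp (- ln (1 / \<alpha>) - 10)" by simp
  also have "\<dots> = \<alpha> * exp (- 10)" using alpha by (simp add: exp_diff exp_minus ln_div divide_inverse)
  also have "exp (- 10::real) \<le> 1 / 1000"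
  proof -
    have "(2::real) ^ 10 \<le> exp 1 ^ 10"
      using exp_ge_add_one_self[of "1::real"] by (intro power_mono) auto
    also have "\<dots> = exp 10" by (simp add: exp_of_nat_mult[symmetric])
    finally have "1024 \<le> exp (10::real)" by simp
    then show ?thesis by (simp add: exp_minus field_simps)
  qed
  finally show ?thesis using alpha by (simp add: mult_left_mono)
qed

lemma final_numeric:
  "exp (- (\<epsilon> / 4) * (\<alpha> * n / 16)) * (real n / t * ((real d + 1) * exp 1)) \<le> 1 / 20"
proof -
  have tp: "0 < real t" using t_pos by simp
  have rp: "1 \<le> real r" using r(2) by simp
  have "4 * r * L \<le> 4 * r * (\<epsilon> / 4 * t)" using tL' rp by (intro mult_left_mono) auto
  also have "\<dots> = \<epsilon> / 4 * (4 * t * r)" by (simp add: algebra_simps)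
  also have "\<dots> \<le> \<epsilon> / 4 * (\<alpha> * n / 16)" using n1 eps by (intro mult_left_mono) auto
  finally have e1: "4 * r * L \<le> \<epsilon> / 4 * (\<alpha> * n / 16)" .
  have e2: "L + 15 * r \<le> 4 * r * L"
  proof -
    have "0 \<le> (4 * r - 1) * (L - 5)" using rp L_ge by (intro mult_nonneg_nonneg) auto
    then show ?thesis using rp by (simp add: algebra_simps)
  qed
  have nt: "real n / t \<le> 65 * r / \<alpha>"
    using n2 tp alpha by (simp add: field_simps)
  have "exp (- (\<epsilon> / 4) * (\<alpha> * n / 16)) \<le> exp (- L - 15 * r)" using e1 e2 by simp
  also have "exp (- L - 15 * r) = \<alpha> / (real d + 1) * exp (-5) * exp (- 15 * r)"
    using alpha by (simp add: L_def exp_diff exp_add exp_minus ln_div field_simps)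
  finally have X: "exp (- (\<epsilon> / 4) * (\<alpha> * n / 16)) \<le> \<alpha> / (real d + 1) * exp (-5) * exp (- 15 * r)" .
  have "exp (- (\<epsilon> / 4) * (\<alpha> * n / 16)) * (real n / t * ((real d + 1) * exp 1))
      \<le> (\<alpha> / (real d + 1) * exp (-5) * exp (- 15 * r)) * (65 * r / \<alpha> * ((real d + 1) * exp 1))"
    using X nt alpha by (intro mult_mono) (auto intro!: divide_nonneg_nonneg mult_nonneg_nonneg)
  also have "\<dots> = (exp (-5) * exp (- 15 * r)) * (65 * r) * exp 1"
    using alpha by (intro aux_cancel) auto
  also have "\<dots> = 65 * (r * exp (- 15 * r)) * (exp (-5) * exp 1)"
    by (simp add: algebra_simps)
  also have "exp (-5) * exp 1 = exp (-4::real)" by (simp add: exp_add[symmetric])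
  finally have Y: "exp (- (\<epsilon> / 4) * (\<alpha> * n / 16)) * (real n / t * ((real d + 1) * exp 1))
      \<le> 65 * (r * exp (- 15 * r)) * exp (-4)" .
  have Z: "r * exp (- 15 * r) \<le> exp (- 14)"
  proof -
    have "real r \<le> exp r" using exp_ge_add_one_self[of "real r"] by linarith
    then have "r * exp (- 15 * r) \<le> exp r * exp (- 15 * r)" by (intro mult_right_mono) auto
    also have "\<dots> = exp (- 14 * r)" by (simp add: exp_add[symmetric])
    also have "\<dots> \<le> exp (- 14)" using rp by simp
    finally show ?thesis .
  qed
  have "exp (- (\<epsilon> / 4) * (\<alpha> * n / 16)) * (real n / t * ((real d + 1) * exp 1)) \<le> 65 * exp (- 14) * exp (- 4)"
  proof -
    have "65 * (r * exp (- 15 * r)) * exp (-4) \<le> 65 * exp (- 14) * exp (- 4::real)"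
      using Z by (intro mult_right_mono mult_left_mono) auto
    then show ?thesis using Y by linarith
  qed
  also have "\<dots> = 65 * exp (- 18)" by (simp add: exp_add[symmetric])
  also have "\<dots> \<le> 1 / 20"
  proof -
    have "(2::real) ^ 18 \<le> exp 1 ^ 18"
      using exp_ge_add_one_self[of "1::real"] by (intro power_mono) auto
    also have "\<dots> = exp 18" by (simp add: exp_of_nat_mult[symmetric])
    finally have "2 ^ 18 \<le> exp (18::real)" by simp
    then show ?thesis by (simp add: exp_minus field_simps)
  qed
  finally show ?thesis .
qed

lemma mech_fail:
  fixes hy :: "bool list \<Rightarrow> hyp" and Ds :: "example list"
  assumes finV: "finite V" and neV: "V \<noteq> {}" and Vp: "V \<subseteq> prefs d"
    and Ds: "length Ds = n" "\<And>r. r \<in> set Ds \<Longrightarrow> fst r \<in> cube d"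
    and c: "c \<in> V" and cB: "score hy t Ds c \<le> B"
    and bad: "\<And>p. p \<in> V \<Longrightarrow> hy p \<notin> G \<Longrightarrow> A \<le> real (Emp (hy p) Ds)"
    and gap: "\<alpha> * n / 16 \<le> A - B"
  shows "measure_pmf.prob (mech V hy t (\<epsilon> / 4) Ds) (- G) \<le> 1 / 20"
proof -
  let ?lam = "\<epsilon> / 4"
  have lam0: "0 \<le> ?lam" using eps by simp
  let ?Sg = "\<Sum>p\<in>V. exp (- ?lam * St t Ds p)"
  have "measure_pmf.prob (mech V hy t ?lam Ds) (- G) \<le> exp (- ?lam * A) * ?Sg / exp (- ?lam * score hy t Ds c)"
    by (rule mech_util[OF finV neV c lam0 bad])
  also have "\<dots> \<le> exp (- ?lam * A) * ?Sg / exp (- ?lam * B)"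
  proof -
    have "exp (- ?lam * B) \<le> exp (- ?lam * score hy t Ds c)"
      using cB lam0 by (simp add: mult_left_mono)
    moreover have "0 \<le> exp (- ?lam * A) * ?Sg" by (intro mult_nonneg_nonneg sum_nonneg) auto
    ultimately show ?thesis by (intro divide_left_mono) auto
  qed
  also have "\<dots> = exp (- ?lam * (A - B)) * ?Sg"
  proof -
    have E: "exp (- ?lam * A) / exp (- ?lam * B) = exp (- ?lam * (A - B))"
      by (subst exp_diff[symmetric]) (simp add: field_simps)
    show ?thesis by (simp only: E[symmetric]) simp
  qed
  also have "\<dots> \<le> exp (- ?lam * (\<alpha> * n / 16)) * (real n / t * ((real d + 1) * exp 1))"
  proof (rule mult_mono)
    show "exp (- ?lam * (A - B)) \<le> exp (- ?lam * (\<alpha> * n / 16))"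
      using mult_left_mono[OF gap lam0] by simp
    have "?Sg \<le> (1 / t) * (\<Sum>i<length Ds. \<Sum>p\<in>V. exp (- ?lam * t * hdist (fst (Ds ! i)) p))"
      by (rule sum_St_bound[OF finV t_pos _ lam0]) (use Ds t_le_n in auto)
    also have "\<dots> \<le> (1 / t) * (\<Sum>i<length Ds. (real d + 1) * exp 1)"
    proof (intro mult_left_mono sum_mono)
      fix i assume "i \<in> {..<length Ds}"
      then have lx: "length (fst (Ds ! i)) = d" using Ds by (auto simp: cube_def)
      have "(\<Sum>p\<in>V. exp (- ?lam * t * hdist (fst (Ds ! i)) p)) = (\<Sum>p\<in>V. exp (- (?lam * t) * hdist (fst (Ds ! i)) p))"
        by (simp add: algebra_simps)
      also have "\<dots> \<le> (\<Sum>p\<in>prefs d. exp (- (?lam * t) * hdist (fst (Ds ! i)) p))"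
        by (rule sum_mono2) (auto simp: finite_prefs Vp)
      also have "\<dots> \<le> (real d + 1) * (1 + exp (- (?lam * t))) ^ d"
        by (rule sum_prefs_hd[OF lx]) (use lam0 in auto)
      also have "\<dots> \<le> (real d + 1) * exp 1"
        using exp_pow_bound[of d "?lam * t"] tL' L_ge d1 by (intro mult_left_mono) auto
      finally show "(\<Sum>p\<in>V. exp (- ?lam * t * hdist (fst (Ds ! i)) p)) \<le> (real d + 1) * exp 1" .
    qed simp
    also have "\<dots> = real n / t * ((real d + 1) * exp 1)" using Ds by simp
    finally show "?Sg \<le> real n / t * ((real d + 1) * exp 1)" .
  qed (auto intro!: sum_nonneg)
  also have "\<dots> \<le> 1 / 20"
    by (rule final_numeric)
  finally show ?thesis .
qed

end


lemma hdist_append: "length a = length b \<Longrightarrow> hdist (a @ x) (b @ y) = hdist a b + hdist x y"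
  by (induction a b rule: hdist.induct) auto

lemma pmf_Un_le: "measure_pmf.prob M (A \<union> B) \<le> measure_pmf.prob M A + measure_pmf.prob M B"
  by (rule measure_subadditive) (simp_all add: measure_pmf.emeasure_eq_measure)

lemma prob_ge_from_compl:
  assumes "measure_pmf.prob M (- G) \<le> 1 / 20"
  shows "measure_pmf.prob M G \<ge> 19 / 20"
proof -
  have "measure_pmf.prob M G = 1 - measure_pmf.prob M (- G)"
    using measure_pmf.prob_compl[of "G" M] by (simp add: Compl_eq_Diff_UNIV)
  then show ?thesis using assms by simp
qed

lemma distr_finite: "distr_on d D \<Longrightarrow> finite (set_pmf D)"
proof -
  assume "distr_on d D"
  then have "set_pmf D \<subseteq> cube d \<times> UNIV" by (auto simp: distr_on_def)
  moreover have "finite (cube d \<times> (UNIV :: bool set))" by (simp add: finite_cube)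
  ultimately show ?thesis by (rule finite_subset)
qed

lemma iid_rec: "Ds \<in> set_pmf (iid D n) \<Longrightarrow> r \<in> set Ds \<Longrightarrow> r \<in> set_pmf D"
  using set_pmf_iid by blast

lemma iid_len: "Ds \<in> set_pmf (iid D n) \<Longrightarrow> length Ds = n"
  using set_pmf_iid by blast

lemma sum_prob_X:
  assumes "finite B"
  shows "(\<Sum>v\<in>B. measure_pmf.prob D {(x, y). x = v}) \<le> 1"
proof -
  have "(\<Sum>v\<in>B. measure_pmf.prob D {(x, y). x = v}) = measure_pmf.prob D (\<Union>v\<in>B. {(x, y). x = v})"
    by (rule measure_pmf.finite_measure_finite_Union[symmetric]) (auto simp: assms disjoint_family_on_def)
  also have "\<dots> \<le> 1" by simp
  finally show ?thesis .
qed

lemma exists_light: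
  assumes "finite B" "B \<noteq> {}" "(\<Sum>v\<in>B. q v) \<le> 1" "\<And>v. v \<in> B \<Longrightarrow> 0 \<le> q v"
  shows "\<exists>v\<in>B. q v \<le> 1 / card B"
proof (rule ccontr)
  assume "\<not> ?thesis"
  then have "\<And>v. v \<in> B \<Longrightarrow> 1 / card B < q v" by auto
  then have "(\<Sum>v\<in>B. 1 / card B) < (\<Sum>v\<in>B. q v)"
    using assms by (intro sum_strict_mono) auto
  then show False using assms by simp
qed

context params
begin

definition Mp :: "example list \<Rightarrow> hyp pmf" where
  "Mp = mech (cube d) point_fn t (\<epsilon> / 4)"

lemma cube_ne: "cube l \<noteq> {}"
  by (auto simp: cube_def intro!: exI[of _ "replicate l False"])

lemma cube_prefs: "cube d \<subseteq> prefs d"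
  by (auto simp: cube_def prefs_def)

lemma Mp_dp: "nabla0_dp d n \<epsilon> Mp"
  unfolding Mp_def by (rule mech_dp) (use finite_cube cube_ne t_le_n eps in \<open>auto simp: cube_def\<close>)

lemma Mp_proper: "proper (point_class d) Mp"
  unfolding proper_def Mp_def using set_pmf_mech[OF finite_cube cube_ne]
  by (auto simp: point_class_def)

end

locale pt_setting = params +
  fixes D :: "example pmf" and u :: "bool list"
  assumes dist: "distr_on d D" and u: "u \<in> cube d"
    and lab: "\<And>x y. (x, y) \<in> set_pmf D \<Longrightarrow> y = (u = x)"
begin

abbreviation "Pos \<equiv> {(x::bool list, y::bool). y}"
abbreviation "X v \<equiv> {(x::bool list, y::bool). x = v}"
abbreviation "Mis v \<equiv> {(x, y). point_fn v x \<noteq> y}"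
abbreviation "G \<equiv> {h. err h D \<le> \<alpha>}"

lemma fin: "finite (set_pmf D)" using dist by (rule distr_finite)

lemma err_eq: "err (point_fn v) D = measure_pmf.prob D (Mis v)"
  by (simp add: err_def)

lemma err_u: "measure_pmf.prob D (Mis u) = 0"
proof -
  have "Mis u \<inter> set_pmf D = {}" using lab by (auto simp: point_fn_def)
  then show ?thesis using measure_Int_set_pmf[of D "Mis u"] by simp
qed

lemma err_le: "v \<noteq> u \<Longrightarrow> measure_pmf.prob D (Mis v) \<le> measure_pmf.prob D Pos + measure_pmf.prob D (X v)"
proof -
  have "measure_pmf.prob D (Mis v) \<le> measure_pmf.prob D (Pos \<union> X v)"
    by (rule measure_pmf.finite_measure_mono) (auto simp: point_fn_def)
  also have "\<dots> \<le> measure_pmf.prob D Pos + measure_pmf.prob D (X v)"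
    by (rule pmf_Un_le)
  finally show ?thesis .
qed

lemma recs: "Ds \<in> set_pmf (iid D n) \<Longrightarrow> length Ds = n \<and> (\<forall>r\<in>set Ds. fst r \<in> cube d)"
  using iid_len iid_rec dist by (fastforce simp: distr_on_def)

lemma Emp_u: "Ds \<in> set_pmf (iid D n) \<Longrightarrow> Emp (point_fn u) Ds = 0"
proof -
  assume Ds: "Ds \<in> set_pmf (iid D n)"
  have "cnt (Mis u) Ds \<le> cnt {} Ds"
    by (rule cnt_mono) (use iid_rec[OF Ds] lab in \<open>auto simp: point_fn_def\<close>)
  then show ?thesis by (simp add: Emp_def cnt_def)
qed

lemma Emp_ge_pos: "Ds \<in> set_pmf (iid D n) \<Longrightarrow> v \<noteq> u \<Longrightarrow> cnt Pos Ds \<le> Emp (point_fn v) Ds"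
  unfolding Emp_def
proof (rule cnt_mono)
  fix r assume Ds: "Ds \<in> set_pmf (iid D n)" and vu: "v \<noteq> u" and r: "r \<in> set Ds" "r \<in> Pos"
  obtain x y where xy: "r = (x, y)" by (cases r)
  have "(x, y) \<in> set_pmf D" using iid_rec[OF Ds r(1)] xy by simp
  then have "y = (u = x)" by (rule lab)
  then show "r \<in> {(x, y). point_fn v x \<noteq> y}" using r(2) xy vu by (auto simp: point_fn_def)
qed

lemma St_u: "Ds \<in> set_pmf (iid D n) \<Longrightarrow> t \<le> cnt Pos Ds \<Longrightarrow> St t Ds u = 0"
proof -
  assume Ds: "Ds \<in> set_pmf (iid D n)" and tc: "t \<le> cnt Pos Ds"
  have "cnt Pos Ds \<le> cnt (Pos \<inter> set_pmf D) Ds"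
    by (rule cnt_mono) (use iid_rec[OF Ds] in auto)
  then have "St t Ds u \<le> t * 0"
    using tc by (intro St_bound_by[where A = "Pos \<inter> set_pmf D"]) (auto dest: lab simp: hd_self)
  then show ?thesis by simp
qed

lemma caseA:
  assumes pA: "\<alpha> / 8 \<le> measure_pmf.prob D Pos"
  shows "\<exists>Good. measure_pmf.prob (iid D n) Good \<ge> 19/20 \<and>
     (\<forall>Ds. Ds \<in> Good \<longrightarrow> Ds \<in> set_pmf (iid D n) \<longrightarrow> measure_pmf.prob (Mp Ds) G \<ge> 19/20)"
proof (intro exI conjI allI impI)
  let ?F = "{Ds. real (cnt Pos Ds) \<le> \<alpha> / 8 * n / 2}"
  have "measure_pmf.prob (iid D n) ?F \<le> exp (- (\<alpha> / 8) * n / 8)"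
    by (rule lower_tail2[OF fin _ pA]) (use alpha in auto)
  also have "\<dots> \<le> exp (- \<alpha> * n / 128)" using alpha by simp
  also have "\<dots> \<le> \<alpha> / 1000" by (rule fail_small)
  finally have "measure_pmf.prob (iid D n) ?F \<le> 1 / 20" using alpha by simp
  then show "measure_pmf.prob (iid D n) (- ?F) \<ge> 19/20" using prob_ge_from_compl[of "iid D n" "- ?F"] by simp
  fix Ds assume "Ds \<in> - ?F" and Ds: "Ds \<in> set_pmf (iid D n)"
  then have cP: "\<alpha> * n / 16 < real (cnt Pos Ds)" by auto
  have tc: "t \<le> cnt Pos Ds" using cP t_le_an by linarith
  show "measure_pmf.prob (Mp Ds) G \<ge> 19/20"
  proof (rule prob_ge_from_compl)
    show "measure_pmf.prob (Mp Ds) (- G) \<le> 1 / 20"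
      unfolding Mp_def
    proof (rule mech_fail[OF finite_cube cube_ne cube_prefs _ _ u])
      show "length Ds = n" "\<And>r. r \<in> set Ds \<Longrightarrow> fst r \<in> cube d" using recs[OF Ds] by auto
      show "score point_fn t Ds u \<le> 0"
        using Emp_u[OF Ds] St_u[OF Ds tc] by (simp add: score_def)
      show "\<alpha> * n / 16 \<le> \<alpha> * n / 16 - 0" by simp
      fix p assume "p \<in> cube d" "point_fn p \<notin> G"
      then have "\<alpha> < err (point_fn p) D" by simp
      then have "p \<noteq> u" using err_u alpha by (auto simp: err_eq)
      then have "real (cnt Pos Ds) \<le> real (Emp (point_fn p) Ds)" using Emp_ge_pos[OF Ds] by simp
      then show "\<alpha> * n / 16 \<le> real (Emp (point_fn p) Ds)" using cP by linarith
    qed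
  qed
qed

lemma light_point:
  assumes v0: "v0 \<in> cube d"
  obtains vs where "vs \<in> cube d" "hdist v0 vs \<le> r" "vs = u \<or> measure_pmf.prob D (X vs) \<le> \<alpha> / 64"
proof (cases "r \<le> d")
  case True
  let ?B = "(\<lambda>w. w @ drop r v0) ` cube r"
  have inj: "inj_on (\<lambda>w. w @ drop r v0) (cube r)" by (rule inj_onI) (auto simp: cube_def)
  have cB: "card ?B = 2 ^ r" using card_image[OF inj] card_cube by simp
  have fB: "finite ?B" using finite_cube by simp
  have Bsub: "?B \<subseteq> cube d" using v0 True by (auto simp: cube_def)
  have "\<exists>v\<in>?B. measure_pmf.prob D (X v) \<le> 1 / card ?B"
    by (rule exists_light[OF fB]) (auto simp: cube_ne sum_prob_X[OF fB])
  then obtain vs where vs: "vs \<in> ?B" "measure_pmf.prob D (X vs) \<le> 1 / 2 ^ r" using cB by auto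
  have "1 / (2::real) ^ r \<le> \<alpha> / 64"
    using r(1) alpha by (simp add: field_simps)
  then have q: "measure_pmf.prob D (X vs) \<le> \<alpha> / 64" using vs by linarith
  obtain w where w: "w \<in> cube r" "vs = w @ drop r v0" using vs by auto
  have "hdist v0 vs = hdist (take r v0 @ drop r v0) (w @ drop r v0)" using w by simp
  also have "\<dots> = hdist (take r v0) w + hdist (drop r v0) (drop r v0)"
    using w True v0 by (intro hdist_append) (auto simp: cube_def)
  also have "\<dots> \<le> r" using hd_le_length[of "take r v0" w] w by (simp add: hd_self cube_def)
  finally show ?thesis using that vs Bsub q by auto
next
  case False
  have "hdist v0 u \<le> length u" by (rule hd_le_length)
  also have "\<dots> \<le> r" using u False by (simp add: cube_def)
  finally show ?thesis using that u by auto
qed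

lemma caseB:
  assumes pB: "measure_pmf.prob D Pos < \<alpha> / 8"
  shows "\<exists>Good. measure_pmf.prob (iid D n) Good \<ge> 19/20 \<and>
     (\<forall>Ds. Ds \<in> Good \<longrightarrow> Ds \<in> set_pmf (iid D n) \<longrightarrow> measure_pmf.prob (Mp Ds) G \<ge> 19/20)"
proof -
  let ?Bd = "{v \<in> cube d. \<alpha> < measure_pmf.prob D (Mis v)}"
  show ?thesis
  proof (cases "?Bd = {}")
    case True
    show ?thesis
    proof (intro exI conjI allI impI)
      show "measure_pmf.prob (iid D n) UNIV \<ge> 19/20" by simp
      fix Ds
      have "measure_pmf.prob (Mp Ds) (- G) = 0"
        unfolding Mp_def by (rule mech_allgood[OF finite_cube cube_ne]) (use True in \<open>auto simp: err_eq\<close>)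
      then show "measure_pmf.prob (Mp Ds) G \<ge> 19/20" by (intro prob_ge_from_compl) simp
    qed
  next
    case False
    then obtain v0 where v0B: "v0 \<in> ?Bd" by auto
    then have v0: "v0 \<in> cube d" by simp
    have qB: "7 * \<alpha> / 8 < measure_pmf.prob D (X v)" if "v \<in> ?Bd" for v
    proof -
      have "v \<noteq> u" using that err_u alpha by auto
      then show ?thesis using err_le[of v] that pB by auto
    qed
    have fBd: "finite ?Bd" using finite_cube by simp
    have cardBd: "real (card ?Bd) * \<alpha> \<le> 2"
    proof -
      have "real (card ?Bd) * (7 * \<alpha> / 8) = (\<Sum>v\<in>?Bd. 7 * \<alpha> / 8)" by simp
      also have "\<dots> \<le> (\<Sum>v\<in>?Bd. measure_pmf.prob D (X v))"
        by (rule sum_mono) (use qB in \<open>auto intro: less_imp_le\<close>)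
      also have "\<dots> \<le> 1" by (rule sum_prob_X[OF fBd])
      finally show ?thesis using alpha by (simp add: field_simps)
    qed
    obtain vs where vs: "vs \<in> cube d" "hdist v0 vs \<le> r" "vs = u \<or> measure_pmf.prob D (X vs) \<le> \<alpha> / 64"
      using light_point[OF v0] by blast
    have errvs: "measure_pmf.prob D (Mis vs) \<le> 9 * \<alpha> / 64"
    proof (cases "vs = u")
      case True then show ?thesis using err_u alpha by simp
    next
      case False then show ?thesis using err_le[of vs] vs(3) pB by auto
    qed
    let ?F1 = "\<lambda>v. {Ds. real (cnt (Mis v) Ds) \<le> \<alpha> * n / 2}"
    let ?F2 = "{Ds. real (cnt (X v0) Ds) \<le> 7 * \<alpha> / 8 * n / 2}"
    let ?F3 = "{Ds. 3 * (9 * \<alpha> / 64) * n \<le> real (cnt (Mis vs) Ds)}"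
    let ?F = "(\<Union>v\<in>?Bd. ?F1 v) \<union> ?F2 \<union> ?F3"
    have smallF: "exp (- c * n) \<le> \<alpha> / 1000" if "\<alpha> / 128 \<le> c" for c
    proof -
      have "\<alpha> / 128 * n \<le> c * n" using that by (intro mult_right_mono) auto
      then have "exp (- c * n) \<le> exp (- \<alpha> * n / 128)" by simp
      then show ?thesis using fail_small by linarith
    qed
    have P1: "measure_pmf.prob (iid D n) (?F1 v) \<le> \<alpha> / 1000" if "v \<in> ?Bd" for v
    proof -
      have "measure_pmf.prob (iid D n) (?F1 v) \<le> exp (- \<alpha> * n / 8)"
        using lower_tail2[OF fin _, of \<alpha> "Mis v" n] that alpha by auto
      also have "\<dots> = exp (- (\<alpha> / 8) * n)" by simp
      also have "\<dots> \<le> \<alpha> / 1000" by (rule smallF) (use alpha in auto)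
      finally show ?thesis .
    qed
    have P2: "measure_pmf.prob (iid D n) ?F2 \<le> \<alpha> / 1000"
    proof -
      have "measure_pmf.prob (iid D n) ?F2 \<le> exp (- (7 * \<alpha> / 8) * n / 8)"
        using lower_tail2[OF fin _, of "7 * \<alpha> / 8" "X v0" n] qB[OF v0B] alpha by auto
      also have "\<dots> = exp (- (7 * \<alpha> / 64) * n)" by simp
      also have "\<dots> \<le> \<alpha> / 1000" by (rule smallF) (use alpha in auto)
      finally show ?thesis .
    qed
    have P3: "measure_pmf.prob (iid D n) ?F3 \<le> \<alpha> / 1000"
    proof -
      have "measure_pmf.prob (iid D n) ?F3 \<le> exp (- (9 * \<alpha> / 64) * n / 2)"
        using upper_tail2[OF fin _ errvs, of n] alpha by auto
      also have "\<dots> = exp (- (9 * \<alpha> / 128) * n)" by simp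
      also have "\<dots> \<le> \<alpha> / 1000" by (rule smallF) (use alpha in auto)
      finally show ?thesis .
    qed
    have PF: "measure_pmf.prob (iid D n) ?F \<le> 1 / 20"
    proof -
      have "measure_pmf.prob (iid D n) ?F \<le> measure_pmf.prob (iid D n) ((\<Union>v\<in>?Bd. ?F1 v) \<union> ?F2) + measure_pmf.prob (iid D n) ?F3"
        by (rule pmf_Un_le)
      also have "\<dots> \<le> measure_pmf.prob (iid D n) (\<Union>v\<in>?Bd. ?F1 v) + measure_pmf.prob (iid D n) ?F2 + measure_pmf.prob (iid D n) ?F3"
        using pmf_Un_le by simp
      also have "measure_pmf.prob (iid D n) (\<Union>v\<in>?Bd. ?F1 v) \<le> (\<Sum>v\<in>?Bd. measure_pmf.prob (iid D n) (?F1 v))"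
        by (rule measure_pmf.finite_measure_subadditive_finite[OF fBd]) auto
      also have "\<dots> \<le> (\<Sum>v\<in>?Bd. \<alpha> / 1000)" by (rule sum_mono) (rule P1)
      also have "\<dots> = real (card ?Bd) * \<alpha> / 1000" by simp
      finally have "measure_pmf.prob (iid D n) ?F \<le> real (card ?Bd) * \<alpha> / 1000 + \<alpha> / 1000 + \<alpha> / 1000"
        using P2 P3 by simp
      then show ?thesis using cardBd alpha by simp
    qed
    show ?thesis
    proof (intro exI conjI allI impI)
      show "measure_pmf.prob (iid D n) (- ?F) \<ge> 19/20" using prob_ge_from_compl[of "iid D n" "- ?F"] PF by simp
      fix Ds assume "Ds \<in> - ?F" and Ds: "Ds \<in> set_pmf (iid D n)"
      then have G1: "\<And>v. v \<in> ?Bd \<Longrightarrow> \<alpha> * n / 2 < real (cnt (Mis v) Ds)"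
        and G2: "7 * \<alpha> / 8 * n / 2 < real (cnt (X v0) Ds)"
        and G3: "real (cnt (Mis vs) Ds) < 3 * (9 * \<alpha> / 64) * n" by auto
      have tc: "t \<le> cnt (X v0) Ds"
      proof -
        have "real t \<le> 7 * \<alpha> / 8 * n / 2" using t_le_an alpha by simp
        then show ?thesis using G2 by linarith
      qed
      have St_vs: "St t Ds vs \<le> t * r"
        by (rule St_bound_by[OF tc]) (use vs(2) in auto)
      show "measure_pmf.prob (Mp Ds) G \<ge> 19/20"
      proof (rule prob_ge_from_compl)
        show "measure_pmf.prob (Mp Ds) (- G) \<le> 1 / 20"
          unfolding Mp_def
        proof (rule mech_fail[OF finite_cube cube_ne cube_prefs _ _ vs(1)])
          show "length Ds = n" "\<And>r. r \<in> set Ds \<Longrightarrow> fst r \<in> cube d" using recs[OF Ds] by auto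
          have "real (St t Ds vs) \<le> real t * r" using St_vs by (simp add: of_nat_mult[symmetric] del: of_nat_mult)
          then show "score point_fn t Ds vs \<le> 3 * (9 * \<alpha> / 64) * n + real t * r"
            using G3 by (simp add: score_def Emp_def)
          show "\<alpha> * n / 16 \<le> \<alpha> * n / 2 - (3 * (9 * \<alpha> / 64) * n + real t * r)"
            using t_small by simp
          fix p assume "p \<in> cube d" "point_fn p \<notin> G"
          then have "p \<in> ?Bd" by (simp add: err_eq)
          then show "\<alpha> * n / 2 \<le> real (Emp (point_fn p) Ds)"
            using G1 by (simp add: Emp_def less_imp_le)
        qed
      qed
    qed
  qed
qed

end

context params
begin

lemma Mp_pac: "pac_learner d (point_class d) \<alpha> n Mp"
  unfolding pac_learner_def
proof (intro allI impI)
  fix D assume A: "distr_on d D \<and> realizable (point_class d) D"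
  then obtain u where u: "u \<in> cube d" and lab: "\<forall>(x, y)\<in>set_pmf D. y = point_fn u x"
    by (auto simp: realizable_def point_class_def)
  interpret P: pt_setting \<epsilon> \<alpha> d t r n D u
    by unfold_locales (use A u lab in \<open>auto simp: point_fn_def\<close>)
  have "\<exists>Good. measure_pmf.prob (iid D n) Good \<ge> 19/20 \<and>
     (\<forall>Ds. Ds \<in> Good \<longrightarrow> Ds \<in> set_pmf (iid D n) \<longrightarrow> measure_pmf.prob (Mp Ds) P.G \<ge> 19/20)"
    using P.caseA P.caseB by (cases "\<alpha> / 8 \<le> measure_pmf.prob D P.Pos") auto
  then obtain Good where "measure_pmf.prob (iid D n) Good \<ge> 19/20"
    "\<And>Ds. Ds \<in> Good \<Longrightarrow> Ds \<in> set_pmf (iid D n) \<Longrightarrow> measure_pmf.prob (Mp Ds) P.G \<ge> 19/20"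
    by blast
  then show "0.9 \<le> measure_pmf.prob (bind_pmf (iid D n) Mp) {h. err h D \<le> \<alpha>}"
    using pac_from_good[OF P.fin] by blast
qed

end


lemma lex_le_iff: "lex_le z x = (z \<le> x)"
proof -
  have "{(u, v). (u::bool) < v} = {(False, True)}" by auto
  then show ?thesis by (simp add: lex_le_def list_le_def list_less_def disj_commute)
qed

lemma take_mono_lex: "(a::bool list) \<le> b \<Longrightarrow> take k a \<le> take k b"
proof (induction k arbitrary: a b)
  case 0
  then show ?case by simp
next
  case (Suc k)
  show ?case
  proof (cases a)
    case Nil
    then show ?thesis by (cases "take (Suc k) b") auto
  next
    case (Cons x a')
    then obtain y b' where b: "b = y # b'" using Suc.prems by (cases b) auto
    then show ?thesis using Suc Cons by auto
  qed
qed

lemma take_between: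
  assumes "take k a = P" "take k b = P" "(a::bool list) \<le> x" "x \<le> b"
  shows "take k x = P"
  using take_mono_lex[OF assms(3), of k] take_mono_lex[OF assms(4), of k] assms(1,2) by simp

definition ext :: "nat \<Rightarrow> bool list \<Rightarrow> bool list" where
  "ext d p = p @ replicate (d - length p) False"

lemma ext_cube: "p \<in> prefs d \<Longrightarrow> ext d p \<in> cube d"
  by (auto simp: ext_def prefs_def cube_def)

lemma take_ext: "length p \<le> d \<Longrightarrow> take (length p) (ext d p) = p"
  by (simp add: ext_def)

context params
begin

definition Mt :: "example list \<Rightarrow> hyp pmf" where
  "Mt = mech (prefs d) (\<lambda>p. thre_fn (ext d p)) t (\<epsilon> / 4)"

lemma prefs_ne: "prefs d \<noteq> {}"
  by (auto simp: prefs_def intro!: exI[of _ "[]"])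

lemma Mt_dp: "nabla0_dp d n \<epsilon> Mt"
  unfolding Mt_def by (rule mech_dp) (use finite_prefs prefs_ne t_le_n eps in \<open>auto simp: prefs_def\<close>)

lemma Mt_proper: "proper (thre_class d) Mt"
  unfolding proper_def Mt_def using set_pmf_mech[OF finite_prefs prefs_ne] ext_cube
  by (auto simp: thre_class_def)

end

locale th_setting = params +
  fixes D :: "example pmf" and z0 :: "bool list"
  assumes dist: "distr_on d D" and z0: "z0 \<in> cube d"
    and lab: "\<And>x y. (x, y) \<in> set_pmf D \<Longrightarrow> y = (z0 \<le> x)"
begin

abbreviation "Mis z \<equiv> {(x, y). thre_fn z x \<noteq> y}"
abbreviation "G \<equiv> {h. err h D \<le> \<alpha>}"
abbreviation "Pref q \<equiv> {(x::bool list, y::bool). take (length q) x = q}"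

lemma fin: "finite (set_pmf D)" using dist by (rule distr_finite)

lemma recs: "Ds \<in> set_pmf (iid D n) \<Longrightarrow> length Ds = n \<and> (\<forall>r\<in>set Ds. fst r \<in> cube d)"
  using iid_len iid_rec dist by (fastforce simp: distr_on_def)

lemma supp_cube: "(x, y) \<in> set_pmf D \<Longrightarrow> x \<in> cube d"
  using dist by (auto simp: distr_on_def)

lemma err_z0: "measure_pmf.prob D (Mis z0) = 0"
proof -
  have "Mis z0 \<inter> set_pmf D = {}" using lab by (auto simp: thre_fn_def lex_le_iff)
  then show ?thesis using measure_Int_set_pmf[of D "Mis z0"] by simp
qed

lemma mono_up:
  assumes Ds: "Ds \<in> set_pmf (iid D n)" and "z0 \<le> z1" "z1 \<le> z"
  shows "cnt (Mis z1) Ds \<le> cnt (Mis z) Ds"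
proof (rule cnt_mono)
  fix r assume r: "r \<in> set Ds" "r \<in> Mis z1"
  obtain x y where xy: "r = (x, y)" by (cases r)
  have "y = (z0 \<le> x)" using lab iid_rec[OF Ds r(1)] xy by simp
  then show "r \<in> Mis z" using r(2) xy assms(2,3) by (auto simp: thre_fn_def lex_le_iff)
qed

lemma mono_down:
  assumes Ds: "Ds \<in> set_pmf (iid D n)" and "z2 \<le> z0" "z \<le> z2"
  shows "cnt (Mis z2) Ds \<le> cnt (Mis z) Ds"
proof (rule cnt_mono)
  fix r assume r: "r \<in> set Ds" "r \<in> Mis z2"
  obtain x y where xy: "r = (x, y)" by (cases r)
  have "y = (z0 \<le> x)" using lab iid_rec[OF Ds r(1)] xy by simp
  then show "r \<in> Mis z" using r(2) xy assms(2,3) by (auto simp: thre_fn_def lex_le_iff)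
qed

definition mu :: "bool list \<Rightarrow> real" where
  "mu q = measure_pmf.prob D (Pref q)"

definition Lset :: "nat set" where
  "Lset = {l. l \<le> d \<and> \<alpha> / 16 < mu (take l z0)}"

definition l0 :: nat where "l0 = Max Lset"

lemma Lset_fin: "finite Lset" unfolding Lset_def by auto

lemma Lset_0: "0 \<in> Lset"
  using alpha by (simp add: Lset_def mu_def)

lemma l0_in: "l0 \<in> Lset"
  unfolding l0_def using Lset_fin Lset_0 by (intro Max_in) auto

lemma l0_le: "l0 \<le> d" using l0_in by (simp add: Lset_def)

lemma l0_max: "l \<in> Lset \<Longrightarrow> l \<le> l0"
  unfolding l0_def using Lset_fin by simp

definition ps :: "bool list" where "ps = take (Suc l0) z0"

lemma ps_prefs: "ps \<in> prefs d" using z0 by (simp add: ps_def prefs_def cube_def)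

lemma err_ps: "measure_pmf.prob D (Mis (ext d ps)) \<le> \<alpha> / 16"
proof (cases "l0 = d")
  case True
  then have "ps = z0" using z0 by (simp add: ps_def cube_def)
  then have "ext d ps = z0" using z0 by (simp add: ext_def cube_def)
  then show ?thesis using err_z0 alpha by simp
next
  case False
  then have l: "Suc l0 \<le> d" using l0_le by simp
  have lps: "length ps = Suc l0" using l z0 by (simp add: ps_def cube_def)
  have "Suc l0 \<notin> Lset" using l0_max by fastforce
  then have mups: "mu ps \<le> \<alpha> / 16" using l by (simp add: Lset_def ps_def not_less)
  have tz: "take (length ps) z0 = ps" using lps by (simp add: ps_def)
  have te: "take (length ps) (ext d ps) = ps" using lps l by (intro take_ext) simp
  have "Mis (ext d ps) \<inter> set_pmf D \<subseteq> Pref ps"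
  proof
    fix r assume r: "r \<in> Mis (ext d ps) \<inter> set_pmf D"
    obtain x y where xy: "r = (x, y)" by (cases r)
    have y: "y = (z0 \<le> x)" using lab r xy by auto
    have m: "(ext d ps \<le> x) \<noteq> (z0 \<le> x)" using r xy y by (auto simp: thre_fn_def lex_le_iff)
    have "take (length ps) x = ps"
    proof (cases "z0 \<le> x")
      case True
      then have "x \<le> ext d ps" using m by auto
      then show ?thesis using take_between[OF tz te True] by simp
    next
      case False
      then have "ext d ps \<le> x" "x \<le> z0" using m by auto
      then show ?thesis using take_between[OF te tz] by simp
    qed
    then show "r \<in> Pref ps" using xy by simp
  qed
  then have "measure_pmf.prob D (Mis (ext d ps) \<inter> set_pmf D) \<le> measure_pmf.prob D (Pref ps)"
    by (rule measure_pmf.finite_measure_mono) simp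
  then show ?thesis using measure_Int_set_pmf[of D "Mis (ext d ps)"] mups by (simp add: mu_def)
qed

lemma hd_ps: "length x = d \<Longrightarrow> take l0 x = take l0 z0 \<Longrightarrow> hdist x ps \<le> 1"
proof -
  assume lx: "length x = d" and tx: "take l0 x = take l0 z0"
  have "hdist x ps = hdist (take l0 x @ drop l0 x) (take l0 z0 @ take 1 (drop l0 z0))"
    by (simp add: ps_def take_add[symmetric])
  also have "\<dots> = hdist (take l0 x) (take l0 z0) + hdist (drop l0 x) (take 1 (drop l0 z0))"
    using lx z0 l0_le by (intro hdist_append) (simp add: cube_def)
  also have "\<dots> \<le> 1" using tx hd_le_length[of "drop l0 x" "take 1 (drop l0 z0)"] by (simp add: hd_self)
  finally show ?thesis .
qed

abbreviation "Zp \<equiv> {z \<in> cube d. z0 \<le> z \<and> \<alpha> < measure_pmf.prob D (Mis z)}"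
abbreviation "Zm \<equiv> {z \<in> cube d. z \<le> z0 \<and> \<alpha> < measure_pmf.prob D (Mis z)}"

lemma finZ: "finite Zp" "finite Zm" using finite_cube by auto

lemma goodT:
  "\<exists>Good. measure_pmf.prob (iid D n) Good \<ge> 19/20 \<and>
     (\<forall>Ds. Ds \<in> Good \<longrightarrow> Ds \<in> set_pmf (iid D n) \<longrightarrow> measure_pmf.prob (Mt Ds) G \<ge> 19/20)"
proof -
  define z1 where "z1 = Min Zp"
  define z2 where "z2 = Max Zm"
  let ?q = "take l0 z0"
  define F1 where "F1 = (if Zp = {} then {} else {Ds. real (cnt (Mis z1) Ds) \<le> \<alpha> * n / 2})"
  define F2 where "F2 = (if Zm = {} then {} else {Ds. real (cnt (Mis z2) Ds) \<le> \<alpha> * n / 2})"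
  define F3 where "F3 = {Ds. real (cnt (Pref ?q) Ds) \<le> \<alpha> / 16 * n / 2}"
  define F4 where "F4 = {Ds. 3 * (\<alpha> / 16) * n \<le> real (cnt (Mis (ext d ps)) Ds)}"
  have smallF: "exp (- c * n) \<le> \<alpha> / 1000" if "\<alpha> / 128 \<le> c" for c
  proof -
    have "\<alpha> / 128 * n \<le> c * n" using that by (intro mult_right_mono) auto
    then have "exp (- c * n) \<le> exp (- \<alpha> * n / 128)" by simp
    then show ?thesis using fail_small by linarith
  qed
  have P1: "measure_pmf.prob (iid D n) F1 \<le> \<alpha> / 1000"
  proof (cases "Zp = {}")
    case True then show ?thesis using alpha by (simp add: F1_def)
  next
    case False
    then have "z1 \<in> Zp" unfolding z1_def using finZ by (intro Min_in) auto
    then have "\<alpha> \<le> measure_pmf.prob D (Mis z1)" by simp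
    then have "measure_pmf.prob (iid D n) F1 \<le> exp (- \<alpha> * n / 8)"
      using lower_tail2[OF fin _, of \<alpha> "Mis z1" n] False alpha by (simp add: F1_def)
    also have "\<dots> = exp (- (\<alpha> / 8) * n)" by simp
    also have "\<dots> \<le> \<alpha> / 1000" by (rule smallF) (use alpha in auto)
    finally show ?thesis .
  qed
  have P2: "measure_pmf.prob (iid D n) F2 \<le> \<alpha> / 1000"
  proof (cases "Zm = {}")
    case True then show ?thesis using alpha by (simp add: F2_def)
  next
    case False
    then have "z2 \<in> Zm" unfolding z2_def using finZ by (intro Max_in) auto
    then have "\<alpha> \<le> measure_pmf.prob D (Mis z2)" by simp
    then have "measure_pmf.prob (iid D n) F2 \<le> exp (- \<alpha> * n / 8)"
      using lower_tail2[OF fin _, of \<alpha> "Mis z2" n] False alpha by (simp add: F2_def)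
    also have "\<dots> = exp (- (\<alpha> / 8) * n)" by simp
    also have "\<dots> \<le> \<alpha> / 1000" by (rule smallF) (use alpha in auto)
    finally show ?thesis .
  qed
  have lq: "length ?q = l0" using l0_le z0 by (simp add: cube_def)
  have muq: "\<alpha> / 16 \<le> measure_pmf.prob D (Pref ?q)"
    using l0_in lq by (simp add: Lset_def mu_def)
  have P3: "measure_pmf.prob (iid D n) F3 \<le> \<alpha> / 1000"
  proof -
    have "measure_pmf.prob (iid D n) F3 \<le> exp (- (\<alpha> / 16) * n / 8)"
      unfolding F3_def by (rule lower_tail2[OF fin _ muq]) (use alpha in auto)
    also have "\<dots> = exp (- (\<alpha> / 128) * n)" by simp
    also have "\<dots> \<le> \<alpha> / 1000" by (rule smallF) simp
    finally show ?thesis .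
  qed
  have P4: "measure_pmf.prob (iid D n) F4 \<le> \<alpha> / 1000"
  proof -
    have "measure_pmf.prob (iid D n) F4 \<le> exp (- (\<alpha> / 16) * n / 2)"
      unfolding F4_def by (rule upper_tail2[OF fin _ err_ps]) (use alpha in auto)
    also have "\<dots> = exp (- (\<alpha> / 32) * n)" by simp
    also have "\<dots> \<le> \<alpha> / 1000" by (rule smallF) (use alpha in auto)
    finally show ?thesis .
  qed
  let ?F = "F1 \<union> F2 \<union> F3 \<union> F4"
  have PF: "measure_pmf.prob (iid D n) ?F \<le> 1 / 20"
  proof -
    have "measure_pmf.prob (iid D n) ?F \<le> measure_pmf.prob (iid D n) (F1 \<union> F2 \<union> F3) + measure_pmf.prob (iid D n) F4"
      by (rule pmf_Un_le)
    also have "\<dots> \<le> measure_pmf.prob (iid D n) (F1 \<union> F2) + measure_pmf.prob (iid D n) F3 + measure_pmf.prob (iid D n) F4"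
      using pmf_Un_le by simp
    also have "\<dots> \<le> measure_pmf.prob (iid D n) F1 + measure_pmf.prob (iid D n) F2 + measure_pmf.prob (iid D n) F3 + measure_pmf.prob (iid D n) F4"
      using pmf_Un_le by simp
    finally show ?thesis using P1 P2 P3 P4 alpha by simp
  qed
  show ?thesis
  proof (intro exI conjI allI impI)
    show "measure_pmf.prob (iid D n) (- ?F) \<ge> 19/20" using prob_ge_from_compl[of "iid D n" "- ?F"] PF by simp
    fix Ds assume "Ds \<in> - ?F" and Ds: "Ds \<in> set_pmf (iid D n)"
    then have G1: "Zp \<noteq> {} \<Longrightarrow> \<alpha> * n / 2 < real (cnt (Mis z1) Ds)"
      and G2: "Zm \<noteq> {} \<Longrightarrow> \<alpha> * n / 2 < real (cnt (Mis z2) Ds)"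
      and G3: "\<alpha> / 16 * n / 2 < real (cnt (Pref ?q) Ds)"
      and G4: "real (cnt (Mis (ext d ps)) Ds) < 3 * (\<alpha> / 16) * n"
      by (auto simp: F1_def F2_def F3_def F4_def split: if_splits)
    have tc: "t \<le> cnt {(x, y). take l0 x = take l0 z0 \<and> length x = d} Ds"
    proof -
      have "cnt (Pref ?q) Ds \<le> cnt {(x, y). take l0 x = take l0 z0 \<and> length x = d} Ds"
        by (rule cnt_mono) (use recs[OF Ds] lq in \<open>auto simp: cube_def\<close>)
      moreover have "real t \<le> \<alpha> / 16 * n / 2" using t_le_an alpha by simp
      ultimately show ?thesis using G3 by linarith
    qed
    have St_ps: "St t Ds ps \<le> t * 1"
    proof (rule St_bound_by[OF tc])
      fix r assume r: "r \<in> {(x, y). take l0 x = take l0 z0 \<and> length x = d}"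
      obtain x y where xy: "r = (x, y)" by (cases r)
      have h1: "length x = d" and h2: "take l0 x = take l0 z0" using r xy by auto
      show "hdist (fst r) ps \<le> 1" using hd_ps[OF h1 h2] xy by simp
    qed
    show "measure_pmf.prob (Mt Ds) G \<ge> 19/20"
    proof (rule prob_ge_from_compl)
      show "measure_pmf.prob (Mt Ds) (- G) \<le> 1 / 20"
        unfolding Mt_def
      proof (rule mech_fail[OF finite_prefs prefs_ne subset_refl _ _ ps_prefs])
        show "length Ds = n" "\<And>r. r \<in> set Ds \<Longrightarrow> fst r \<in> cube d" using recs[OF Ds] by auto
        show "score (\<lambda>p. thre_fn (ext d p)) t Ds ps \<le> 3 * (\<alpha> / 16) * n + real t"
          using G4 St_ps by (simp add: score_def Emp_def)
        show "\<alpha> * n / 16 \<le> \<alpha> * n / 2 - (3 * (\<alpha> / 16) * n + real t)"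
          using t_le_an by simp
        fix p assume p: "p \<in> prefs d" "thre_fn (ext d p) \<notin> G"
        let ?z = "ext d p"
        have zc: "?z \<in> cube d" using p(1) by (rule ext_cube)
        have ez: "\<alpha> < measure_pmf.prob D (Mis ?z)" using p(2) by (simp add: err_def)
        show "\<alpha> * n / 2 \<le> real (Emp (thre_fn ?z) Ds)"
        proof (cases "z0 \<le> ?z")
          case True
          then have zZ: "?z \<in> Zp" using zc ez by simp
          then have ne: "Zp \<noteq> {}" by auto
          have "z1 \<le> ?z" unfolding z1_def using finZ zZ by simp
          moreover have "z0 \<le> z1"
          proof -
            have "z1 \<in> Zp" unfolding z1_def using finZ ne by (intro Min_in) auto
            then show ?thesis by simp
          qed
          ultimately have "cnt (Mis z1) Ds \<le> cnt (Mis ?z) Ds" using mono_up[OF Ds] by blast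
          then show ?thesis using G1[OF ne] by (simp add: Emp_def)
        next
          case False
          then have zz: "?z \<le> z0" by simp
          then have zZ: "?z \<in> Zm" using zc ez by simp
          then have ne: "Zm \<noteq> {}" by auto
          have "?z \<le> z2" unfolding z2_def using finZ zZ by simp
          moreover have "z2 \<le> z0"
          proof -
            have "z2 \<in> Zm" unfolding z2_def using finZ ne by (intro Max_in) auto
            then show ?thesis by simp
          qed
          ultimately have "cnt (Mis z2) Ds \<le> cnt (Mis ?z) Ds" using mono_down[OF Ds] by blast
          then show ?thesis using G2[OF ne] by (simp add: Emp_def)
        qed
      qed
    qed
  qed
qed

end

context params
begin

lemma Mt_pac: "pac_learner d (thre_class d) \<alpha> n Mt"
  unfolding pac_learner_def
proof (intro allI impI)
  fix D assume A: "distr_on d D \<and> realizable (thre_class d) D"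
  then obtain z0 where z0: "z0 \<in> cube d" and lab: "\<forall>(x, y)\<in>set_pmf D. y = thre_fn z0 x"
    by (auto simp: realizable_def thre_class_def)
  interpret T: th_setting \<epsilon> \<alpha> d t r n D z0
    by unfold_locales (use A z0 lab in \<open>auto simp: thre_fn_def lex_le_iff\<close>)
  obtain Good where "measure_pmf.prob (iid D n) Good \<ge> 19/20"
    "\<And>Ds. Ds \<in> Good \<Longrightarrow> Ds \<in> set_pmf (iid D n) \<Longrightarrow> measure_pmf.prob (Mt Ds) T.G \<ge> 19/20"
    using T.goodT by blast
  then show "0.9 \<le> measure_pmf.prob (bind_pmf (iid D n) Mt) {h. err h D \<le> \<alpha>}"
    using pac_from_good[OF T.fin] by blast
qed

end


lemma nat_ceil_le: "0 \<le> (x::real) \<Longrightarrow> real (nat \<lceil>x\<rceil>) \<le> x + 1"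
proof -
  assume "0 \<le> x"
  then have "real (nat \<lceil>x\<rceil>) = of_int \<lceil>x\<rceil>" by simp
  also have "\<dots> \<le> x + 1" by (rule of_int_ceiling_le_add_one)
  finally show ?thesis .
qed

lemma nat_ceil_ge: "(x::real) \<le> real (nat \<lceil>x\<rceil>)"
  by (rule real_nat_ceiling_ge)

lemma params_exist:
  fixes \<epsilon> \<alpha> :: real and d :: nat
  assumes eps: "0 < \<epsilon>" "\<epsilon> \<le> 1" and alpha: "0 < \<alpha>" "\<alpha> < 1" and d1: "1 \<le> d"
  shows "\<exists>t r n. params \<epsilon> \<alpha> d t r n \<and>
     real n \<le> 19500 * (1 / (\<alpha> * \<epsilon>)) * (1 + ln (real d)) * (1 + ln (1 / \<alpha>)) ^ 2"
proof -
  define a where "a = 1 + ln (real d)"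
  define b where "b = 1 + ln (1 / \<alpha>)"
  have a1: "1 \<le> a" using d1 by (simp add: a_def)
  have b1: "1 \<le> b" using alpha by (simp add: b_def)
  define L where "L = ln (real d + 1) + ln (1 / \<alpha>) + 5"
  have L5: "5 \<le> L" using alpha by (simp add: L_def)
  define t where "t = nat \<lceil>4 * L / \<epsilon>\<rceil>"
  define r where "r = nat \<lceil>log 2 (64 / \<alpha>)\<rceil>"
  define n where "n = nat \<lceil>64 * t * r / \<alpha>\<rceil>"
  have tL: "L \<le> \<epsilon> / 4 * t"
  proof -
    have "4 * L / \<epsilon> \<le> t" unfolding t_def by (rule nat_ceil_ge)
    then show ?thesis using eps by (simp add: field_simps)
  qed
  have t_up: "real t \<le> 5 * L / \<epsilon>"
  proof -
    have "real t \<le> 4 * L / \<epsilon> + 1" unfolding t_def using L5 eps by (intro nat_ceil_le) simp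
    moreover have "1 \<le> L / \<epsilon>" using L5 eps by (simp add: field_simps)
    ultimately show ?thesis by simp
  qed
  have log64: "log 2 (64::real) = 6"
  proof -
    show ?thesis using log_nat_power[of "2::real" 2 6] by simp
  qed
  have lg: "6 < log 2 (64 / \<alpha>)"
  proof -
    have "log 2 64 < log 2 (64 / \<alpha>)" using alpha by (subst log_less_cancel_iff) (auto simp: field_simps)
    then show ?thesis using log64 by simp
  qed
  have r_ge: "log 2 (64 / \<alpha>) \<le> real r" unfolding r_def by (rule nat_ceil_ge)
  have r1: "1 \<le> r" using lg r_ge by linarith
  have r2: "64 / \<alpha> \<le> 2 ^ r"
  proof -
    have "64 / \<alpha> = 2 powr (log 2 (64 / \<alpha>))" using alpha by simp
    also have "\<dots> \<le> 2 powr (real r)" using r_ge by simp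
    also have "\<dots> = 2 ^ r" by (simp add: powr_realpow)
    finally show ?thesis .
  qed
  have r_up: "real r \<le> 10 * b"
  proof -
    have rr: "real r \<le> log 2 (64 / \<alpha>) + 1" unfolding r_def using lg by (intro nat_ceil_le) simp
    have "log 2 (64 / \<alpha>) = (ln 64 + ln (1 / \<alpha>)) / ln 2"
      using alpha by (simp add: log_def ln_div)
    also have "\<dots> \<le> (ln 64 + ln (1 / \<alpha>)) / (1/2)"
      using ln2_ge alpha by (intro divide_left_mono) auto
    also have "ln (64::real) = 6 * ln 2"
      using ln_realpow[of "2::real" 6] by simp
    finally have "log 2 (64 / \<alpha>) \<le> (6 * ln 2 + ln (1 / \<alpha>)) / (1/2)" .
    moreover have "0 \<le> ln (1 / \<alpha>)" using alpha by simp
    ultimately show ?thesis using ln2_le rr by (simp add: b_def)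
  qed
  have L_up: "L \<le> 6 * a * b"
  proof -
    have "ln (real d + 1) \<le> ln (2 * real d)" using d1 by simp
    also have "\<dots> = ln 2 + ln (real d)" using d1 by (simp add: ln_mult)
    also have "\<dots> \<le> a" using ln2_le by (simp add: a_def)
    finally have "L \<le> a + b + 4" by (simp add: L_def b_def)
    also have "\<dots> \<le> 6 * a * b"
    proof -
      have "a * 1 \<le> a * b" using a1 b1 by (intro mult_left_mono) auto
      moreover have "1 * b \<le> a * b" using a1 b1 by (intro mult_right_mono) auto
      ultimately show ?thesis using b1 by linarith
    qed
    finally show ?thesis .
  qed
  have tpos: "1 \<le> t"
  proof -
    have "5 \<le> \<epsilon> / 4 * t" using tL L5 by linarith
    also have "\<dots> \<le> 1 / 4 * t" using eps by (intro mult_right_mono) auto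
    finally show ?thesis by simp
  qed
  have n1: "64 * t * r \<le> \<alpha> * n"
  proof -
    have "64 * t * r / \<alpha> \<le> n" unfolding n_def by (rule nat_ceil_ge)
    then show ?thesis using alpha by (simp add: field_simps)
  qed
  have tr1: "1 \<le> real t * r"
  proof -
    have "1 * 1 \<le> real t * r" using tpos r1 by (intro mult_mono) auto
    then show ?thesis by simp
  qed
  have h: "real n \<le> 64 * real t * real r / \<alpha> + 1"
    unfolding n_def using alpha by (intro order.trans[OF nat_ceil_le]) auto
  have "\<alpha> * real n \<le> \<alpha> * (64 * real t * real r / \<alpha> + 1)" using h alpha by (intro mult_left_mono) auto
  also have "\<dots> = 64 * real t * real r + \<alpha>" using alpha by (simp add: field_simps)
  also have "\<dots> \<le> 65 * real t * real r" using tr1 alpha by linarith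
  finally have n2: "\<alpha> * n \<le> 65 * t * r" by simp
  have n_up: "real n \<le> 65 * t * r / \<alpha>" using n2 alpha by (simp add: field_simps)
  have P: "params \<epsilon> \<alpha> d t r n"
    by unfold_locales (use eps alpha d1 tL r1 r2 n1 n2 in \<open>simp_all add: L_def\<close>)
  have tr: "real t * real r \<le> (5 * L / \<epsilon>) * (10 * b)"
    using t_up r_up L5 eps by (intro mult_mono) auto
  have Lb: "(5 * L / \<epsilon>) * (10 * b) \<le> (5 * (6 * a * b) / \<epsilon>) * (10 * b)"
    using L_up eps b1 by (intro mult_right_mono divide_right_mono) auto
  have "real n \<le> 65 * (real t * real r) / \<alpha>" using n_up by (simp add: mult.assoc)
  also have "\<dots> \<le> 65 * ((5 * (6 * a * b) / \<epsilon>) * (10 * b)) / \<alpha>"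
    using tr Lb alpha by (intro divide_right_mono mult_left_mono) auto
  also have "\<dots> = 19500 * (1 / (\<alpha> * \<epsilon>)) * a * b ^ 2"
    by (simp add: field_simps power2_eq_square)
  finally show ?thesis using P by (auto simp: a_def b_def)
qed

theorem theorem5p4:
  shows "\<exists>C k::nat. C > 0 \<and> (\<forall>\<epsilon> \<alpha> (d::nat). 0 < \<epsilon> \<and> \<epsilon> \<le> 1 \<and> 0 < \<alpha> \<and> \<alpha> < 1 \<and> d \<ge> 1 \<longrightarrow>
     (\<exists>n M. real n \<le> C * (1 / (\<alpha> * \<epsilon>)) * (1 + ln (real d))
                 * ((1 + ln (1 / \<alpha>)) * (1 + ln (1 + ln (real d)))) ^ k
            \<and> nabla0_dp d n \<epsilon> M \<and> proper (point_class d) M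
            \<and> pac_learner d (point_class d) \<alpha> n M)
   \<and> (\<exists>n M. real n \<le> C * (1 / (\<alpha> * \<epsilon>)) * (1 + ln (real d))
                 * ((1 + ln (1 / \<alpha>)) * (1 + ln (1 + ln (real d)))) ^ k
            \<and> nabla0_dp d n \<epsilon> M \<and> proper (thre_class d) M
            \<and> pac_learner d (thre_class d) \<alpha> n M))"
proof -
  have main: "(\<exists>n M. real n \<le> 19500 * (1 / (\<alpha> * \<epsilon>)) * (1 + ln (real d))
                 * ((1 + ln (1 / \<alpha>)) * (1 + ln (1 + ln (real d)))) ^ 2
            \<and> nabla0_dp d n \<epsilon> M \<and> proper (point_class d) M
            \<and> pac_learner d (point_class d) \<alpha> n M)
   \<and> (\<exists>n M. real n \<le> 19500 * (1 / (\<alpha> * \<epsilon>)) * (1 + ln (real d))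
                 * ((1 + ln (1 / \<alpha>)) * (1 + ln (1 + ln (real d)))) ^ 2
            \<and> nabla0_dp d n \<epsilon> M \<and> proper (thre_class d) M
            \<and> pac_learner d (thre_class d) \<alpha> n M)"
    if A: "0 < \<epsilon> \<and> \<epsilon> \<le> 1 \<and> 0 < \<alpha> \<and> \<alpha> < 1 \<and> 1 \<le> d" for \<epsilon> \<alpha> :: real and d :: nat
  proof -
  obtain t r n where P: "params \<epsilon> \<alpha> d t r n"
    and nb: "real n \<le> 19500 * (1 / (\<alpha> * \<epsilon>)) * (1 + ln (real d)) * (1 + ln (1 / \<alpha>)) ^ 2"
    using params_exist[of \<epsilon> \<alpha> d] A by auto
  interpret params \<epsilon> \<alpha> d t r n by (rule P)
  have a1: "1 \<le> 1 + ln (real d)" using A by simp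
  have b1: "1 \<le> 1 + ln (1 / \<alpha>)" using A by simp
  have c1: "1 \<le> 1 + ln (1 + ln (real d))" using A by simp
  have "(1 + ln (1 / \<alpha>)) ^ 2 * 1 \<le> (1 + ln (1 / \<alpha>)) ^ 2 * (1 + ln (1 + ln (real d))) ^ 2"
    using c1 by (intro mult_left_mono) (auto simp: one_le_power)
  then have "(1 + ln (1 / \<alpha>)) ^ 2 \<le> ((1 + ln (1 / \<alpha>)) * (1 + ln (1 + ln (real d)))) ^ 2"
    by (simp add: power_mult_distrib)
  moreover have "0 \<le> 19500 * (1 / (\<alpha> * \<epsilon>)) * (1 + ln (real d))" using A a1 by simp
  ultimately have nb2: "real n \<le> 19500 * (1 / (\<alpha> * \<epsilon>)) * (1 + ln (real d))
                 * ((1 + ln (1 / \<alpha>)) * (1 + ln (1 + ln (real d)))) ^ 2"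
  proof -
    let ?K = "19500 * (1 / (\<alpha> * \<epsilon>)) * (1 + ln (real d))"
    have "?K * (1 + ln (1 / \<alpha>)) ^ 2 \<le> ?K * ((1 + ln (1 / \<alpha>)) * (1 + ln (1 + ln (real d)))) ^ 2"
      by (rule mult_left_mono) fact+
    then show ?thesis using nb by linarith
  qed
  have "\<exists>n M. real n \<le> 19500 * (1 / (\<alpha> * \<epsilon>)) * (1 + ln (real d))
                 * ((1 + ln (1 / \<alpha>)) * (1 + ln (1 + ln (real d)))) ^ 2
            \<and> nabla0_dp d n \<epsilon> M \<and> proper (point_class d) M
            \<and> pac_learner d (point_class d) \<alpha> n M"
    using nb2 Mp_dp Mp_proper Mp_pac by blast
  moreover have "\<exists>n M. real n \<le> 19500 * (1 / (\<alpha> * \<epsilon>)) * (1 + ln (real d))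
                 * ((1 + ln (1 / \<alpha>)) * (1 + ln (1 + ln (real d)))) ^ 2
            \<and> nabla0_dp d n \<epsilon> M \<and> proper (thre_class d) M
            \<and> pac_learner d (thre_class d) \<alpha> n M"
    using nb2 Mt_dp Mt_proper Mt_pac by blast
  ultimately show ?thesis by blast
  qed
  show ?thesis
    apply (rule exI[of _ "19500::real"], rule exI[of _ "2::nat"], rule conjI, simp)
    apply (intro allI impI)
    apply (rule main, assumption)
    done
qed


end
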